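(* Let $A$ be a $C^\infty$-ring and $I\le A$ an ideal. Then $g\in\sqrt[\infty]{I}$ if and only if the class of $g$ in $A/I$ is $\infty$-nilpotent.
   Context: A $C^\infty$-ring is a product-preserving functor from the category of $\mathbb R^n$ ($n\ge0$) and smooth maps to sets; ideals are ideals of the underlying $\mathbb R$-algebra; $\otimes_\infty$ is the coproduct of $C^\infty$-rings and $A\{a^{-1}\}$ is the universal $C^\infty$-ring inverting $a$; $\sqrt[\infty]{I}:=\{f\in A\mid (A/I)\{f^{-1}\}\cong0\}$. For $B$ a $C^\infty$-ring, $g\in B$ and $f\in B\otimes_\infty C^\infty(\mathbb R)$, $f(g)\in B$ denotes the image of $f$ under the morphism $B\otimes_\infty C^\infty(\mathbb R)\to B$ which is the identity on $B$ and sends the coordinate $x$ to $g$. An element $g\in B$ is $\infty$-nilpotent if there is $f\in B\otimes_\infty C^\infty(\mathbb R)$ with $f(g)=0$ whose image in $B\otimes_\infty C^\infty(\mathbb R\setminus\{0\})$ (under the map induced by restriction $C^\infty(\mathbb R)\to C^\infty(\mathbb R\setminus\{0\})$) is invertible. *)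

theory Defs
  imports "HOL-Analysis.Analysis"
begin

text \<open>A point of R^n is represented as a function nat => real of which only the
coordinates 0..n-1 matter.\<close>

definition pd :: "nat \<Rightarrow> ((nat \<Rightarrow> real) \<Rightarrow> real) \<Rightarrow> (nat \<Rightarrow> real) \<Rightarrow> real" where
  "pd i f x = deriv (\<lambda>t. f (x(i := t))) (x i)"

fun ipd :: "nat list \<Rightarrow> ((nat \<Rightarrow> real) \<Rightarrow> real) \<Rightarrow> (nat \<Rightarrow> real) \<Rightarrow> real" where
  "ipd [] f = f"
| "ipd (i # is) f = pd i (ipd is f)"

definition smooth_on :: "nat \<Rightarrow> ((nat \<Rightarrow> real) \<Rightarrow> bool) \<Rightarrow> ((nat \<Rightarrow> real) \<Rightarrow> real) \<Rightarrow> bool" where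
  "smooth_on n U f \<longleftrightarrow>
     (\<forall>x y. (\<forall>i<n. x i = y i) \<longrightarrow> f x = f y) \<and>
     (\<forall>is. set is \<subseteq> {..<n} \<longrightarrow>
        continuous_on {x. U x} (ipd is f) \<and>
        (\<forall>x i. U x \<and> i < n \<longrightarrow> (\<lambda>t. ipd is f (x(i := t))) differentiable (at (x i))))"

definition smooth :: "nat \<Rightarrow> ((nat \<Rightarrow> real) \<Rightarrow> real) \<Rightarrow> bool" where
  "smooth n f \<longleftrightarrow> smooth_on n (\<lambda>_. True) f"

text \<open>A product-preserving functor F from the category of the R^n and smooth maps to Set
is equivalently given by the set A = F(R) together with the operations
Phi n f : A^n -> A, f : R^n -> R smooth, subject to the projection and composition laws.\<close>

type_synonym 'a cops = "nat \<Rightarrow> ((nat \<Rightarrow> real) \<Rightarrow> real) \<Rightarrow> (nat \<Rightarrow> 'a) \<Rightarrow> 'a"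

definition cinf_ring :: "'a set \<Rightarrow> 'a cops \<Rightarrow> bool" where
  "cinf_ring A \<Phi> \<longleftrightarrow>
     (\<forall>n f a. smooth n f \<and> (\<forall>i<n. a i \<in> A) \<longrightarrow> \<Phi> n f a \<in> A) \<and>
     (\<forall>n f a b. (\<forall>i<n. a i = b i) \<longrightarrow> \<Phi> n f a = \<Phi> n f b) \<and>
     (\<forall>n f g a. (\<forall>x. f x = g x) \<longrightarrow> \<Phi> n f a = \<Phi> n g a) \<and>
     (\<forall>n i a. i < n \<and> (\<forall>j<n. a j \<in> A) \<longrightarrow> \<Phi> n (\<lambda>x. x i) a = a i) \<and>
     (\<forall>m n f g a. smooth m f \<and> (\<forall>j<m. smooth n (g j)) \<and> (\<forall>i<n. a i \<in> A) \<longrightarrow>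
        \<Phi> n (\<lambda>x. f (\<lambda>j. g j x)) a = \<Phi> m f (\<lambda>j. \<Phi> n (g j) a))"

definition pair2 :: "'a \<Rightarrow> 'a \<Rightarrow> nat \<Rightarrow> 'a" where
  "pair2 a b = (\<lambda>i. if i = 0 then a else b)"

definition czero :: "'a cops \<Rightarrow> 'a" where
  "czero \<Phi> = \<Phi> 0 (\<lambda>_. 0) (\<lambda>_. undefined)"

definition cadd :: "'a cops \<Rightarrow> 'a \<Rightarrow> 'a \<Rightarrow> 'a" where
  "cadd \<Phi> a b = \<Phi> 2 (\<lambda>x. x 0 + x 1) (pair2 a b)"

definition csub :: "'a cops \<Rightarrow> 'a \<Rightarrow> 'a \<Rightarrow> 'a" where
  "csub \<Phi> a b = \<Phi> 2 (\<lambda>x. x 0 - x 1) (pair2 a b)"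

definition cmul :: "'a cops \<Rightarrow> 'a \<Rightarrow> 'a \<Rightarrow> 'a" where
  "cmul \<Phi> a b = \<Phi> 2 (\<lambda>x. x 0 * x 1) (pair2 a b)"

text \<open>Ideal of the underlying commutative R-algebra (closure under scalars
follows from closure under multiplication by the constants of A).\<close>
definition cinf_ideal :: "'a set \<Rightarrow> 'a cops \<Rightarrow> 'a set \<Rightarrow> bool" where
  "cinf_ideal A \<Phi> I \<longleftrightarrow> I \<subseteq> A \<and> czero \<Phi> \<in> I \<and>
     (\<forall>a\<in>I. \<forall>b\<in>I. cadd \<Phi> a b \<in> I) \<and> (\<forall>a\<in>A. \<forall>b\<in>I. cmul \<Phi> a b \<in> I)"

definition qcls :: "'a set \<Rightarrow> 'a cops \<Rightarrow> 'a set \<Rightarrow> 'a \<Rightarrow> 'a set" where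
  "qcls A \<Phi> I a = {b \<in> A. csub \<Phi> b a \<in> I}"

definition qcarrier :: "'a set \<Rightarrow> 'a cops \<Rightarrow> 'a set \<Rightarrow> 'a set set" where
  "qcarrier A \<Phi> I = qcls A \<Phi> I ` A"

definition qops :: "'a set \<Rightarrow> 'a cops \<Rightarrow> 'a set \<Rightarrow> 'a set cops" where
  "qops A \<Phi> I n f X = qcls A \<Phi> I (\<Phi> n f (\<lambda>i. SOME a. a \<in> X i))"

text \<open>B is presented by the free C-infinity ring F(B) on the set B modulo the kernel J of
the evaluation F(B) -> B. Then B \<otimes> C^\<infinity>(U) = C^\<infinity>_fin(R^B x U)/(J), where
C^\<infinity>_fin(R^B x U) consists of smooth functions on R^B x U depending on finitely
many B-coordinates. Such functions are represented as maps ('b => real) => real => real.\<close>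

definition cp_adm :: "'b set \<Rightarrow> (real \<Rightarrow> bool) \<Rightarrow> (('b \<Rightarrow> real) \<Rightarrow> real \<Rightarrow> real) \<Rightarrow> bool" where
  "cp_adm B U F \<longleftrightarrow> (\<exists>k h c. (\<forall>i<k. c i \<in> B) \<and> smooth_on (Suc k) (\<lambda>x. U (x k)) h \<and>
      (\<forall>\<phi> t. U t \<longrightarrow> F \<phi> t = h (\<lambda>i. if i < k then \<phi> (c i) else t)))"

definition cp_ker :: "'b set \<Rightarrow> 'b cops \<Rightarrow> (('b \<Rightarrow> real) \<Rightarrow> real) \<Rightarrow> bool" where
  "cp_ker B \<Psi> G \<longleftrightarrow> (\<exists>m j d. (\<forall>i<m. d i \<in> B) \<and> smooth m j \<and>
      (\<forall>\<phi>. G \<phi> = j (\<lambda>i. \<phi> (d i))) \<and> \<Psi> m j d = czero \<Psi>)"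

definition cp_eq :: "'b set \<Rightarrow> 'b cops \<Rightarrow> (real \<Rightarrow> bool) \<Rightarrow>
    (('b \<Rightarrow> real) \<Rightarrow> real \<Rightarrow> real) \<Rightarrow> (('b \<Rightarrow> real) \<Rightarrow> real \<Rightarrow> real) \<Rightarrow> bool" where
  "cp_eq B \<Psi> U F F' \<longleftrightarrow> (\<exists>(N::nat) q G. (\<forall>l<N. cp_adm B U (q l) \<and> cp_ker B \<Psi> (G l)) \<and>
      (\<forall>\<phi> t. U t \<longrightarrow> F \<phi> t - F' \<phi> t = (\<Sum>l<N. q l \<phi> t * G l \<phi>)))"

definition cp_invertible :: "'b set \<Rightarrow> 'b cops \<Rightarrow> (real \<Rightarrow> bool) \<Rightarrow>
    (('b \<Rightarrow> real) \<Rightarrow> real \<Rightarrow> real) \<Rightarrow> bool" where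
  "cp_invertible B \<Psi> U F \<longleftrightarrow>
     (\<exists>F'. cp_adm B U F' \<and> cp_eq B \<Psi> U (\<lambda>\<phi> t. F \<phi> t * F' \<phi> t) (\<lambda>\<phi> t. 1))"

text \<open>f(g): the image of f under B \<otimes>_\<infinity> C^\<infinity>(R) -> B, identity on B, x |-> g.\<close>
definition cp_eval_is :: "'b set \<Rightarrow> 'b cops \<Rightarrow> (('b \<Rightarrow> real) \<Rightarrow> real \<Rightarrow> real) \<Rightarrow> 'b \<Rightarrow> 'b \<Rightarrow> bool" where
  "cp_eval_is B \<Psi> F g v \<longleftrightarrow> (\<exists>k h c. (\<forall>i<k. c i \<in> B) \<and> smooth (Suc k) h \<and>
      (\<forall>\<phi> t. F \<phi> t = h (\<lambda>i. if i < k then \<phi> (c i) else t)) \<and>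
      \<Psi> (Suc k) h (c(k := g)) = v)"

text \<open>B{b^{-1}} = (B \<otimes>_\<infinity> C^\<infinity>(R)) / (x b - 1). Equality of elements there:\<close>
definition loc_eq :: "'b set \<Rightarrow> 'b cops \<Rightarrow> 'b \<Rightarrow>
    (('b \<Rightarrow> real) \<Rightarrow> real \<Rightarrow> real) \<Rightarrow> (('b \<Rightarrow> real) \<Rightarrow> real \<Rightarrow> real) \<Rightarrow> bool" where
  "loc_eq B \<Psi> b F F' \<longleftrightarrow> (\<exists>H. cp_adm B (\<lambda>_. True) H \<and>
      cp_eq B \<Psi> (\<lambda>_. True) (\<lambda>\<phi> t. F \<phi> t - H \<phi> t * (t * \<phi> b - 1)) F')"

text \<open>B{b^{-1}} is isomorphic to the zero C-infinity ring iff it has exactly one element.\<close>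
definition loc_trivial :: "'b set \<Rightarrow> 'b cops \<Rightarrow> 'b \<Rightarrow> bool" where
  "loc_trivial B \<Psi> b \<longleftrightarrow> (\<forall>F F'. cp_adm B (\<lambda>_. True) F \<and> cp_adm B (\<lambda>_. True) F' \<longrightarrow>
      loc_eq B \<Psi> b F F')"

definition inf_radical :: "'a set \<Rightarrow> 'a cops \<Rightarrow> 'a set \<Rightarrow> 'a set" where
  "inf_radical A \<Phi> I = {f \<in> A. loc_trivial (qcarrier A \<Phi> I) (qops A \<Phi> I) (qcls A \<Phi> I f)}"

definition inf_nilpotent :: "'b set \<Rightarrow> 'b cops \<Rightarrow> 'b \<Rightarrow> bool" where
  "inf_nilpotent B \<Psi> g \<longleftrightarrow> (\<exists>F. cp_adm B (\<lambda>_. True) F \<and> cp_eval_is B \<Psi> F g (czero \<Psi>) \<and>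
      cp_invertible B \<Psi> (\<lambda>t. t \<noteq> 0) F)"

end

theory Submission
  imports Defs "HOL-Computational_Algebra.Polynomial"
begin

definition loc :: "nat \<Rightarrow> ((nat\<Rightarrow>real)\<Rightarrow>real) \<Rightarrow> bool" where
 "loc n f \<longleftrightarrow> (\<forall>x y. (\<forall>i<n. x i = y i) \<longrightarrow> f x = f y)"

definition pdiff :: "nat \<Rightarrow> ((nat\<Rightarrow>real)\<Rightarrow>bool) \<Rightarrow> ((nat\<Rightarrow>real)\<Rightarrow>real) \<Rightarrow> bool" where
 "pdiff n U f \<longleftrightarrow> (\<forall>x i. U x \<and> i<n \<longrightarrow> (\<lambda>t. f (x(i:=t))) differentiable (at (x i)))"

lemma ipd_append: "ipd (is @ [i]) f = ipd is (pd i f)"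
  by (induction "is") auto

lemma smooth_on_iff: "smooth_on n U f \<longleftrightarrow> loc n f \<and>
   (\<forall>is. set is \<subseteq> {..<n} \<longrightarrow> continuous_on {x. U x} (ipd is f) \<and> pdiff n U (ipd is f))"
  unfolding smooth_on_def loc_def pdiff_def by (intro iffI conjI; elim conjE; assumption)

lemma loc_pd: assumes "loc n f" "i < n" shows "loc n (pd i f)"
  unfolding loc_def pd_def
proof (intro allI impI)
  fix x y :: "nat \<Rightarrow> real" assume h: "\<forall>j<n. x j = y j"
  have "(\<lambda>t. f (x(i := t))) = (\<lambda>t. f (y(i := t)))"
    proof (intro ext)
    fix t show "f (x(i := t)) = f (y(i := t))"
    proof -
      have "\<forall>j<n. (x(i:=t)) j = (y(i:=t)) j" using h by simp
      then show ?thesis using assms(1) unfolding loc_def by blast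
    qed
  qed
  then show "deriv (\<lambda>t. f (x(i := t))) (x i) = deriv (\<lambda>t. f (y(i := t))) (y i)"
    using h assms(2) by simp
qed

lemma smooth_on_pd: assumes "smooth_on n U f" "i < n" shows "smooth_on n U (pd i f)"
  unfolding smooth_on_iff
proof (intro conjI allI impI)
  show "loc n (pd i f)" using assms loc_pd unfolding smooth_on_iff by blast
  fix "is" assume "set is \<subseteq> {..<n}"
  then have "set (is @ [i]) \<subseteq> {..<n}" using assms(2) by auto
  then show "continuous_on {x. U x} (ipd is (pd i f))" "pdiff n U (ipd is (pd i f))"
    using assms(1)[unfolded smooth_on_iff, THEN conjunct2, rule_format, of "is @ [i]"] 
    unfolding ipd_append by blast+
qed

lemma smooth_on_cont: "smooth_on n U f \<Longrightarrow> continuous_on {x. U x} f"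
  unfolding smooth_on_iff by (drule conjunct2, drule spec[of _ "[]"]) simp

lemma smooth_on_pdiff: "smooth_on n U f \<Longrightarrow> pdiff n U f"
  unfolding smooth_on_iff by (drule conjunct2, drule spec[of _ "[]"]) simp

lemma smooth_on_loc: "smooth_on n U f \<Longrightarrow> loc n f"
  unfolding smooth_on_iff by blast

lemma cont_upd: "continuous_on UNIV (\<lambda>t::real. (x::nat\<Rightarrow>real)(i:=t))"
proof (intro continuous_on_coordinatewise_then_product)
  fix j show "continuous_on UNIV (\<lambda>t. (x(i:=t)) j)"
    by (cases "j = i") auto
qed

lemma open_slice: fixes x :: "nat \<Rightarrow> real" assumes "open {x. U x}"
  shows "open {t. U (x(i:=t))}"
proof -
  have "{t. U (x(i:=t))} = (\<lambda>t. x(i:=t)) -` {x. U x}" by auto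
  moreover have "continuous_on UNIV (\<lambda>t. x(i:=t))" by (rule cont_upd)
  ultimately show ?thesis using open_vimage[OF assms] by metis
qed

lemma pd_cong: assumes "open {x. U x}" "\<And>y. U y \<Longrightarrow> f y = g y" "U x"
  shows "pd i f x = pd i g x"
  unfolding pd_def
proof (rule deriv_cong_ev)
  show "\<forall>\<^sub>F t in nhds (x i). f (x(i := t)) = g (x(i := t))"
    unfolding eventually_nhds
    by (rule exI[of _ "{t. U (x(i:=t))}"]) (use open_slice[OF assms(1)] assms in auto)
qed simp

lemma diff_transform_open: "f differentiable at (a::real) \<Longrightarrow> open S \<Longrightarrow> a \<in> S \<Longrightarrow> (\<And>x. x\<in>S \<Longrightarrow> f x = g x)
   \<Longrightarrow> g differentiable at a"
  unfolding differentiable_def using has_derivative_transform_within_open[of f _ a UNIV S g] by blast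

lemma diff_cong: fixes f g :: "(nat\<Rightarrow>real)\<Rightarrow>real" assumes "open {x. U x}" "\<And>y. U y \<Longrightarrow> f y = g y" "U x"
   "(\<lambda>t. f (x(i:=t))) differentiable at (x i)"
  shows "(\<lambda>t. g (x(i:=t))) differentiable at (x i)"
  by (rule diff_transform_open[OF assms(4) open_slice[OF assms(1), of x i]]) (use assms in auto)

lemma pdiff_cong: assumes "open {x. U x}" "\<And>y. U y \<Longrightarrow> f y = g y" "pdiff n U f"
  shows "pdiff n U g"
  unfolding pdiff_def
proof (intro allI impI)
  fix x i assume h: "U x \<and> i < n"
  have d: "(\<lambda>t. f (x(i:=t))) differentiable at (x i)" using assms(3) h unfolding pdiff_def by blast
  show "(\<lambda>t. g (x(i:=t))) differentiable at (x i)"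
    using diff_cong[OF assms(1) assms(2) _ d] h by blast
qed

lemma smooth_on_coind:
  assumes op: "open {x. U x}" and S0: "S f"
  and step: "\<And>f. S f \<Longrightarrow> loc n f \<and> continuous_on {x. U x} f \<and> pdiff n U f \<and>
        (\<forall>i<n. \<exists>f'. S f' \<and> (\<forall>x. U x \<longrightarrow> pd i f x = f' x))"
  shows "smooth_on n U f"
proof -
  have claim: "\<forall>f. S f \<longrightarrow> (\<exists>f'. S f' \<and> (\<forall>x. U x \<longrightarrow> ipd is f x = f' x))"
    if "set is \<subseteq> {..<n}" for "is"
    using that
  proof (induction "is")
    case Nil then show ?case by auto
  next
    case (Cons i "is")
    show ?case
    proof (intro allI impI)
      fix f assume "S f"
      then obtain f1 where f1: "S f1" "\<forall>x. U x \<longrightarrow> ipd is f x = f1 x" using Cons by (meson order.trans set_subset_Cons)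
      have "i < n" using Cons.prems by simp
      with step[OF f1(1)] obtain f2 where f2: "S f2" "\<forall>x. U x \<longrightarrow> pd i f1 x = f2 x"
        by blast
      have "\<forall>x. U x \<longrightarrow> ipd (i#is) f x = f2 x"
      proof (intro allI impI)
        fix x assume "U x"
        have "ipd (i#is) f x = pd i (ipd is f) x" by simp
        also have "\<dots> = pd i f1 x" by (rule pd_cong[OF op]) (use f1 \<open>U x\<close> in auto)
        also have "\<dots> = f2 x" using f2 \<open>U x\<close> by auto
        finally show "ipd (i#is) f x = f2 x" .
      qed
      then show "\<exists>f'. S f' \<and> (\<forall>x. U x \<longrightarrow> ipd (i # is) f x = f' x)" using f2 by blast
    qed
  qed
  show ?thesis unfolding smooth_on_iff
  proof (intro conjI allI impI)
    show "loc n f" using step[OF S0] by blast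
  next
    fix "is" assume "set is \<subseteq> {..<n}"
    then obtain f' where f': "S f'" "\<forall>x. U x \<longrightarrow> ipd is f x = f' x" using claim S0 by blast
    show "continuous_on {x. U x} (ipd is f)"
    proof -
      have "continuous_on {x. U x} f'" using step[OF f'(1)] by blast
      then show ?thesis using continuous_on_cong[of "{x. U x}" "{x. U x}" "ipd is f" f'] f'(2) by simp
    qed
    show "pdiff n U (ipd is f)"
    proof -
      have "pdiff n U f'" using step[OF f'(1)] by blast
      then show ?thesis using pdiff_cong[OF op, of f' "ipd is f"] f'(2) by simp
    qed
  qed
qed


lemma pdiff_D: "pdiff n U f \<Longrightarrow> U x \<Longrightarrow> i < n \<Longrightarrow>
   ((\<lambda>t. f (x(i:=t))) has_real_derivative pd i f x) (at (x i))"
  unfolding pdiff_def pd_def using DERIV_deriv_iff_real_differentiable by blast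

lemma pd_eqI: "((\<lambda>t. f (x(i:=t))) has_real_derivative D) (at (x i)) \<Longrightarrow> pd i f x = D"
  unfolding pd_def by (rule DERIV_imp_deriv)

lemma diffI: "(g has_real_derivative D) (at a) \<Longrightarrow> g differentiable at a"
  using real_differentiable_def by blast

lemma loc_op: "loc n f \<Longrightarrow> loc n g \<Longrightarrow> loc n (\<lambda>x. h (f x) (g x))"
  unfolding loc_def[of n "\<lambda>x. h (f x) (g x)"]
proof (intro allI impI)
  fix x y :: "nat \<Rightarrow> real" assume a: "loc n f" "loc n g" "\<forall>i<n. x i = y i"
  then have "f x = f y" "g x = g y" unfolding loc_def by blast+
  then show "h (f x) (g x) = h (f y) (g y)" by simp
qed

inductive_set clos :: "nat \<Rightarrow> ((nat\<Rightarrow>real)\<Rightarrow>bool) \<Rightarrow> ((nat\<Rightarrow>real)\<Rightarrow>real) set \<Rightarrow> ((nat\<Rightarrow>real)\<Rightarrow>real) set"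
  for n U G where
  base: "smooth_on n U f \<Longrightarrow> f \<in> clos n U G"
| gen: "f \<in> G \<Longrightarrow> f \<in> clos n U G"
| add: "f \<in> clos n U G \<Longrightarrow> g \<in> clos n U G \<Longrightarrow> (\<lambda>x. f x + g x) \<in> clos n U G"
| mul: "f \<in> clos n U G \<Longrightarrow> g \<in> clos n U G \<Longrightarrow> (\<lambda>x. f x * g x) \<in> clos n U G"

definition good :: "nat \<Rightarrow> ((nat\<Rightarrow>real)\<Rightarrow>bool) \<Rightarrow> ((nat\<Rightarrow>real)\<Rightarrow>real) set \<Rightarrow> ((nat\<Rightarrow>real)\<Rightarrow>real) \<Rightarrow> bool" where
  "good n U S f \<longleftrightarrow> loc n f \<and> continuous_on {x. U x} f \<and> pdiff n U f \<and>
        (\<forall>i<n. \<exists>f'\<in>S. \<forall>x. U x \<longrightarrow> pd i f x = f' x)"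

lemma clos_good:
  assumes op: "open {x. U x}" and HG: "\<And>f. f \<in> G \<Longrightarrow> good n U (clos n U G) f"
  and f: "f \<in> clos n U G"
  shows "good n U (clos n U G) f"
  using f
proof (induction rule: clos.induct)
  case (base f)
  have "\<forall>i<n. \<exists>f'\<in>clos n U G. \<forall>x. U x \<longrightarrow> pd i f x = f' x"
  proof (intro allI impI)
    fix i assume "i < n"
    then have "pd i f \<in> clos n U G" by (intro clos.base smooth_on_pd[OF base])
    then show "\<exists>f'\<in>clos n U G. \<forall>x. U x \<longrightarrow> pd i f x = f' x" by blast
  qed
  then show ?case unfolding good_def
    using smooth_on_loc[OF base] smooth_on_cont[OF base] smooth_on_pdiff[OF base] by blast
next
  case (gen f)
  then show ?case using HG by blast
next
  case (add f g)
  have gf: "loc n f" "continuous_on {x. U x} f" "pdiff n U f" and gf4: "\<forall>i<n. \<exists>f'\<in>clos n U G. \<forall>x. U x \<longrightarrow> pd i f x = f' x"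
    using add.IH(1) unfolding good_def by blast+
  have gg: "loc n g" "continuous_on {x. U x} g" "pdiff n U g" and gg4: "\<forall>i<n. \<exists>f'\<in>clos n U G. \<forall>x. U x \<longrightarrow> pd i g x = f' x"
    using add.IH(2) unfolding good_def by blast+
  have L: "loc n (\<lambda>x. f x + g x)" by (rule loc_op[OF gf(1) gg(1)])
  have C: "continuous_on {x. U x} (\<lambda>x. f x + g x)" by (rule continuous_on_add[OF gf(2) gg(2)])
  have D: "((\<lambda>t. f (x(i:=t)) + g (x(i:=t))) has_real_derivative pd i f x + pd i g x) (at (x i))"
    if "U x" "i < n" for x i
    by (rule DERIV_add[OF pdiff_D[OF gf(3) that] pdiff_D[OF gg(3) that]])
  have P: "pdiff n U (\<lambda>x. f x + g x)" unfolding pdiff_def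
  proof (intro allI impI)
    fix x i assume "U x \<and> i < n" then show "(\<lambda>t. f (x(i:=t)) + g (x(i:=t))) differentiable at (x i)"
      using D diffI by blast
  qed
  have Q: "\<exists>f'\<in>clos n U G. \<forall>x. U x \<longrightarrow> pd i (\<lambda>x. f x + g x) x = f' x" if iln: "i < n" for i
  proof -
    obtain f1 where f1: "f1 \<in> clos n U G" "\<forall>x. U x \<longrightarrow> pd i f x = f1 x" using gf4 iln by blast
    obtain g1 where g1: "g1 \<in> clos n U G" "\<forall>x. U x \<longrightarrow> pd i g x = g1 x" using gg4 iln by blast
    have "\<forall>x. U x \<longrightarrow> pd i (\<lambda>x. f x + g x) x = f1 x + g1 x"
    proof (intro allI impI)
      fix x assume "U x"
      have "pd i (\<lambda>x. f x + g x) x = pd i f x + pd i g x" by (rule pd_eqI[OF D[OF \<open>U x\<close> iln]])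
      then show "pd i (\<lambda>x. f x + g x) x = f1 x + g1 x" using f1(2) g1(2) \<open>U x\<close> by simp
    qed
    then show ?thesis using clos.add[OF f1(1) g1(1)] by (intro bexI[of _ "\<lambda>x. f1 x + g1 x"]) simp_all
  qed
  show ?case unfolding good_def using L C P Q by blast
next
  case (mul f g)
  have gf: "loc n f" "continuous_on {x. U x} f" "pdiff n U f" and gf4: "\<forall>i<n. \<exists>f'\<in>clos n U G. \<forall>x. U x \<longrightarrow> pd i f x = f' x"
    using mul.IH(1) unfolding good_def by blast+
  have gg: "loc n g" "continuous_on {x. U x} g" "pdiff n U g" and gg4: "\<forall>i<n. \<exists>f'\<in>clos n U G. \<forall>x. U x \<longrightarrow> pd i g x = f' x"
    using mul.IH(2) unfolding good_def by blast+
  have L: "loc n (\<lambda>x. f x * g x)" by (rule loc_op[OF gf(1) gg(1)])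
  have C: "continuous_on {x. U x} (\<lambda>x. f x * g x)" by (rule continuous_on_mult[OF gf(2) gg(2)])
  have D: "((\<lambda>t. f (x(i:=t)) * g (x(i:=t))) has_real_derivative pd i f x * g x + f x * pd i g x) (at (x i))"
    if "U x" "i < n" for x i
  proof -
    have "((\<lambda>t. f (x(i:=t)) * g (x(i:=t))) has_real_derivative pd i f x * g (x(i:=x i)) + pd i g x * f (x(i:=x i))) (at (x i))"
      by (rule DERIV_mult[OF pdiff_D[OF gf(3) that] pdiff_D[OF gg(3) that]])
    then show ?thesis by (simp add: mult.commute)
  qed
  have P: "pdiff n U (\<lambda>x. f x * g x)" unfolding pdiff_def
  proof (intro allI impI)
    fix x i assume "U x \<and> i < n" then show "(\<lambda>t. f (x(i:=t)) * g (x(i:=t))) differentiable at (x i)"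
      using D diffI by blast
  qed
  have Q: "\<exists>f'\<in>clos n U G. \<forall>x. U x \<longrightarrow> pd i (\<lambda>x. f x * g x) x = f' x" if iln: "i < n" for i
  proof -
    obtain f1 where f1: "f1 \<in> clos n U G" "\<forall>x. U x \<longrightarrow> pd i f x = f1 x" using gf4 iln by blast
    obtain g1 where g1: "g1 \<in> clos n U G" "\<forall>x. U x \<longrightarrow> pd i g x = g1 x" using gg4 iln by blast
    have "\<forall>x. U x \<longrightarrow> pd i (\<lambda>x. f x * g x) x = f1 x * g x + f x * g1 x"
    proof (intro allI impI)
      fix x assume "U x"
      have "pd i (\<lambda>x. f x * g x) x = pd i f x * g x + f x * pd i g x" by (rule pd_eqI[OF D[OF \<open>U x\<close> iln]])
      then show "pd i (\<lambda>x. f x * g x) x = f1 x * g x + f x * g1 x" using f1(2) g1(2) \<open>U x\<close> by simp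
    qed
    moreover have "(\<lambda>x. f1 x * g x + f x * g1 x) \<in> clos n U G"
      by (rule clos.add[OF clos.mul[OF f1(1) mul.hyps(2)] clos.mul[OF mul.hyps(1) g1(1)]])
    ultimately show ?thesis by (intro bexI[of _ "\<lambda>x. f1 x * g x + f x * g1 x"]) simp_all
  qed
  show ?case unfolding good_def using L C P Q by blast
qed

lemma clos_smooth:
  assumes op: "open {x. U x}" and HG: "\<And>f. f \<in> G \<Longrightarrow> good n U (clos n U G) f"
  and f: "f \<in> clos n U G"
  shows "smooth_on n U f"
proof (rule smooth_on_coind[OF op, of "\<lambda>f. f \<in> clos n U G"])
  show "f \<in> clos n U G" by (rule f)
next
  fix h assume hc: "h \<in> clos n U G"
  have gh: "good n U (clos n U G) h" by (rule clos_good[OF op HG hc])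
  then show "loc n h \<and> continuous_on {x. U x} h \<and> pdiff n U h \<and>
        (\<forall>i<n. \<exists>f'. f' \<in> clos n U G \<and> (\<forall>x. U x \<longrightarrow> pd i h x = f' x))"
    unfolding good_def Bex_def .
qed

lemma smooth_add: "open {x. U x} \<Longrightarrow> smooth_on n U f \<Longrightarrow> smooth_on n U g \<Longrightarrow> smooth_on n U (\<lambda>x. f x + g x)"
  by (rule clos_smooth[of U "{}"]) (simp, simp, rule clos.add[OF clos.base clos.base])

lemma smooth_mult: "open {x. U x} \<Longrightarrow> smooth_on n U f \<Longrightarrow> smooth_on n U g \<Longrightarrow> smooth_on n U (\<lambda>x. f x * g x)"
  by (rule clos_smooth[of U "{}"]) (simp, simp, rule clos.mul[OF clos.base clos.base])


lemma smooth_const: assumes op: "open {x. U x}" shows "smooth_on n U (\<lambda>_. c)"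
proof (rule smooth_on_coind[OF op, of "\<lambda>f. \<exists>c. f = (\<lambda>_. c)"])
  show "\<exists>c'. (\<lambda>_::nat\<Rightarrow>real. c) = (\<lambda>_. c')" by blast
next
  fix f :: "(nat\<Rightarrow>real)\<Rightarrow>real" assume "\<exists>c. f = (\<lambda>_. c)"
  then obtain c where f: "f = (\<lambda>_. c)" by blast
  have D: "((\<lambda>t. f (x(i:=t))) has_real_derivative 0) (at (x i))" for x i
    unfolding f by (rule DERIV_const)
  show "loc n f \<and> continuous_on {x. U x} f \<and> pdiff n U f \<and>
        (\<forall>i<n. \<exists>f'. (\<exists>c. f' = (\<lambda>_. c)) \<and> (\<forall>x. U x \<longrightarrow> pd i f x = f' x))"
  proof (intro conjI allI impI)
    show "loc n f" unfolding loc_def f by simp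
    show "continuous_on {x. U x} f" unfolding f by (rule continuous_on_const)
    show "pdiff n U f" unfolding pdiff_def using D diffI by blast
    fix i assume "i < n"
    show "\<exists>f'. (\<exists>c. f' = (\<lambda>_. c)) \<and> (\<forall>x. U x \<longrightarrow> pd i f x = f' x)"
    proof (rule exI[of _ "\<lambda>_. 0"], intro conjI allI impI)
      fix x show "pd i f x = 0" by (rule pd_eqI[OF D[of x i]])
    qed (rule exI, rule refl)
  qed
qed

lemma smooth_proj: assumes op: "open {x. U x}" and j: "j < n" shows "smooth_on n U (\<lambda>x. x j)"
proof (rule smooth_on_coind[OF op, of "\<lambda>f. f = (\<lambda>x. x j) \<or> (\<exists>c. f = (\<lambda>_. c))"])
  show "(\<lambda>x::nat\<Rightarrow>real. x j) = (\<lambda>x. x j) \<or> (\<exists>c. (\<lambda>x::nat\<Rightarrow>real. x j) = (\<lambda>_. c))" by blast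
next
  fix f :: "(nat\<Rightarrow>real)\<Rightarrow>real" assume A: "f = (\<lambda>x. x j) \<or> (\<exists>c. f = (\<lambda>_. c))"
  show "loc n f \<and> continuous_on {x. U x} f \<and> pdiff n U f \<and>
        (\<forall>i<n. \<exists>f'. (f' = (\<lambda>x. x j) \<or> (\<exists>c. f' = (\<lambda>_. c))) \<and> (\<forall>x. U x \<longrightarrow> pd i f x = f' x))"
  proof (cases "f = (\<lambda>x. x j)")
    case True
    have D: "((\<lambda>t. f (x(i:=t))) has_real_derivative (if i = j then 1 else 0)) (at (x i))" for x i
    proof (cases "i = j")
      case True
      then show ?thesis unfolding \<open>f = (\<lambda>x. x j)\<close> by (simp add: DERIV_ident)
    next
      case False
      then show ?thesis unfolding \<open>f = (\<lambda>x. x j)\<close> by (simp add: DERIV_const)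
    qed
    show ?thesis
    proof (intro conjI allI impI)
      show "loc n f" unfolding loc_def True using j by simp
      show "continuous_on {x. U x} f" unfolding True
        by (rule continuous_on_subset[OF continuous_on_product_coordinates]) simp
      show "pdiff n U f" unfolding pdiff_def using D diffI by blast
      fix i assume "i < n"
      show "\<exists>f'. (f' = (\<lambda>x. x j) \<or> (\<exists>c. f' = (\<lambda>_. c))) \<and> (\<forall>x. U x \<longrightarrow> pd i f x = f' x)"
      proof (rule exI[of _ "\<lambda>_. if i = j then 1 else 0"], intro conjI allI impI)
        fix x show "pd i f x = (if i = j then 1 else 0)" by (rule pd_eqI[OF D[of x i]])
      qed (rule disjI2, rule exI, rule refl)
    qed
  next
    case False
    then obtain c where f: "f = (\<lambda>_. c)" using A by blast
    have D: "((\<lambda>t. f (x(i:=t))) has_real_derivative 0) (at (x i))" for x i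
      unfolding f by (rule DERIV_const)
    show ?thesis
    proof (intro conjI allI impI)
      show "loc n f" unfolding loc_def f by simp
      show "continuous_on {x. U x} f" unfolding f by (rule continuous_on_const)
      show "pdiff n U f" unfolding pdiff_def using D diffI by blast
      fix i assume "i < n"
      show "\<exists>f'. (f' = (\<lambda>x. x j) \<or> (\<exists>c. f' = (\<lambda>_. c))) \<and> (\<forall>x. U x \<longrightarrow> pd i f x = f' x)"
      proof (rule exI[of _ "\<lambda>_. 0"], intro conjI allI impI)
        fix x show "pd i f x = 0" by (rule pd_eqI[OF D[of x i]])
      qed (rule disjI2, rule exI, rule refl)
    qed
  qed
qed

lemma smooth_glue:
  assumes o1: "open {x. U1 x}" and o2: "open {x. U2 x}"
    and s1: "smooth_on n U1 f1" and s2: "smooth_on n U2 f2"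
    and e1: "\<forall>x. U1 x \<longrightarrow> f x = f1 x" and e2: "\<forall>x. U2 x \<longrightarrow> f x = f2 x" and l: "loc n f"
  shows "smooth_on n (\<lambda>x. U1 x \<or> U2 x) f"
proof -
  have op: "open {x. U1 x \<or> U2 x}"
    using open_Un[OF o1 o2] by (simp add: Collect_disj_eq)
  define S where "S = (\<lambda>F. loc n F \<and> (\<exists>g1 g2. smooth_on n U1 g1 \<and> smooth_on n U2 g2 \<and>
      (\<forall>x. U1 x \<longrightarrow> F x = g1 x) \<and> (\<forall>x. U2 x \<longrightarrow> F x = g2 x)))"
  show ?thesis
  proof (rule smooth_on_coind[OF op, of S])
    show "S f" unfolding S_def using l s1 s2 e1 e2 by blast
  next
    fix F assume "S F"
    then obtain g1 g2 where lF: "loc n F" and g1: "smooth_on n U1 g1" and g2: "smooth_on n U2 g2"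
      and h1: "\<forall>x. U1 x \<longrightarrow> F x = g1 x" and h2: "\<forall>x. U2 x \<longrightarrow> F x = g2 x"
      unfolding S_def by blast
    have c1: "continuous_on {x. U1 x} F"
      using smooth_on_cont[OF g1] continuous_on_cong[of "{x. U1 x}" "{x. U1 x}" F g1] h1 by simp
    have c2: "continuous_on {x. U2 x} F"
      using smooth_on_cont[OF g2] continuous_on_cong[of "{x. U2 x}" "{x. U2 x}" F g2] h2 by simp
    have C: "continuous_on {x. U1 x \<or> U2 x} F"
      using continuous_on_open_Un[OF o1 o2 c1 c2] by (simp add: Collect_disj_eq)
    have P1: "pdiff n U1 F" by (rule pdiff_cong[OF o1 _ smooth_on_pdiff[OF g1]]) (use h1 in simp)
    have P2: "pdiff n U2 F" by (rule pdiff_cong[OF o2 _ smooth_on_pdiff[OF g2]]) (use h2 in simp)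
    have P: "pdiff n (\<lambda>x. U1 x \<or> U2 x) F" using P1 P2 unfolding pdiff_def by blast
    have Q: "\<exists>f'. S f' \<and> (\<forall>x. U1 x \<or> U2 x \<longrightarrow> pd i F x = f' x)" if "i < n" for i
    proof (rule exI[of _ "pd i F"], rule conjI)
      have a: "loc n (pd i F)" by (rule loc_pd[OF lF that])
      have b: "smooth_on n U1 (pd i g1)" by (rule smooth_on_pd[OF g1 that])
      have c: "smooth_on n U2 (pd i g2)" by (rule smooth_on_pd[OF g2 that])
      have d: "\<forall>x. U1 x \<longrightarrow> pd i F x = pd i g1 x"
      proof (intro allI impI)
        fix x show "U1 x \<Longrightarrow> pd i F x = pd i g1 x" by (rule pd_cong[OF o1]) (use h1 in simp_all)
      qed
      have e: "\<forall>x. U2 x \<longrightarrow> pd i F x = pd i g2 x"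
      proof (intro allI impI)
        fix x show "U2 x \<Longrightarrow> pd i F x = pd i g2 x" by (rule pd_cong[OF o2]) (use h2 in simp_all)
      qed
      show "S (pd i F)" unfolding S_def
        by (rule conjI[OF a], rule exI[of _ "pd i g1"], rule exI[of _ "pd i g2"]) (use b c d e in blast)
    qed simp
    show "loc n F \<and> continuous_on {x. U1 x \<or> U2 x} F \<and> pdiff n (\<lambda>x. U1 x \<or> U2 x) F \<and>
        (\<forall>i<n. \<exists>f'. S f' \<and> (\<forall>x. U1 x \<or> U2 x \<longrightarrow> pd i F x = f' x))"
      using lF C P Q by blast
  qed
qed

lemma smooth_on_false: "loc n f \<Longrightarrow> smooth_on n (\<lambda>_. False) f"
  unfolding smooth_on_iff pdiff_def by simp

lemma smooth_cong:
  assumes o: "open {x. U x}" and s: "smooth_on n U g" and e: "\<forall>x. U x \<longrightarrow> f x = g x" and l: "loc n f"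
  shows "smooth_on n U f"
proof -
  have "smooth_on n (\<lambda>x. U x \<or> False) f"
    by (rule smooth_glue[OF o _ s smooth_on_false[OF l] e _ l]) simp_all
  then show ?thesis by simp
qed

lemma smooth_mono_dom:
  assumes o: "open {x. V x}" and s: "smooth_on n U f" and sub: "\<forall>x. V x \<longrightarrow> U x"
  shows "smooth_on n V f"
proof (rule smooth_on_coind[OF o, of "smooth_on n U"])
  show "smooth_on n U f" by (rule s)
next
  fix F assume F: "smooth_on n U F"
  have "continuous_on {x. V x} F"
    by (rule continuous_on_subset[OF smooth_on_cont[OF F]]) (use sub in auto)
  moreover have "pdiff n V F" using smooth_on_pdiff[OF F] sub unfolding pdiff_def by blast
  moreover have "\<exists>f'. smooth_on n U f' \<and> (\<forall>x. V x \<longrightarrow> pd i F x = f' x)" if "i < n" for i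
    by (rule exI[of _ "pd i F"]) (simp add: smooth_on_pd[OF F that])
  ultimately show "loc n F \<and> continuous_on {x. V x} F \<and> pdiff n V F \<and>
        (\<forall>i<n. \<exists>f'. smooth_on n U f' \<and> (\<forall>x. V x \<longrightarrow> pd i F x = f' x))"
    using smooth_on_loc[OF F] by blast
qed


lemma key_pdiff:
  assumes "\<forall>i<n. \<exists>f'. S f' \<and> (\<forall>x. U x \<longrightarrow> ((\<lambda>t. F (x(i:=t))) has_real_derivative f' x) (at (x i)))"
  shows "pdiff n U F"
  unfolding pdiff_def
proof (intro allI impI)
  fix x i assume h: "U x \<and> i < n"
  then obtain f' where "\<forall>x. U x \<longrightarrow> ((\<lambda>t. F (x(i:=t))) has_real_derivative f' x) (at (x i))"
    using assms by blast
  then show "(\<lambda>t. F (x(i:=t))) differentiable at (x i)" using h diffI by blast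
qed

lemma key_pd:
  assumes "\<forall>i<n. \<exists>f'. S f' \<and> (\<forall>x. U x \<longrightarrow> ((\<lambda>t. F (x(i:=t))) has_real_derivative f' x) (at (x i)))"
  shows "\<forall>i<n. \<exists>f'. S f' \<and> (\<forall>x. U x \<longrightarrow> pd i F x = f' x)"
proof (intro allI impI)
  fix i assume "i < n"
  then obtain f' where f': "S f'" "\<forall>x. U x \<longrightarrow> ((\<lambda>t. F (x(i:=t))) has_real_derivative f' x) (at (x i))"
    using assms by blast
  have "\<forall>x. U x \<longrightarrow> pd i F x = f' x"
  proof (intro allI impI)
    fix x assume "U x" then show "pd i F x = f' x" using f'(2) pd_eqI by blast
  qed
  then show "\<exists>f'. S f' \<and> (\<forall>x. U x \<longrightarrow> pd i F x = f' x)" using f'(1) by (intro exI[of _ f']) simp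
qed

lemma cont_comp_sigma: "continuous_on UNIV (\<lambda>x::nat\<Rightarrow>real. x \<circ> \<sigma>)"
  by (intro continuous_on_coordinatewise_then_product) (simp add: o_def)

lemma smooth_reindex:
  assumes oV: "open {x. V x}" and s: "smooth_on m V f" and sig: "\<forall>i<m. \<sigma> i < n"
    and inj: "inj_on \<sigma> {..<m}"
  shows "smooth_on n (\<lambda>x. V (x \<circ> \<sigma>)) (\<lambda>x. f (x \<circ> \<sigma>))"
proof -
  have oW: "open {x. V (x \<circ> \<sigma>)}"
  proof -
    have "{x. V (x \<circ> \<sigma>)} = (\<lambda>x. x \<circ> \<sigma>) -` {x. V x}" by auto
    then show ?thesis using open_vimage[OF oV cont_comp_sigma] by simp
  qed
  define S where "S = (\<lambda>F. (\<exists>g. smooth_on m V g \<and> F = (\<lambda>x. g (x \<circ> \<sigma>))) \<or> (\<exists>c. F = (\<lambda>_::nat\<Rightarrow>real. c)))"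
  have S0: "\<And>c. S (\<lambda>_. c)" unfolding S_def by blast
  show ?thesis
  proof (rule smooth_on_coind[OF oW, of S])
    show "S (\<lambda>x. f (x \<circ> \<sigma>))" unfolding S_def using s by blast
  next
    fix F assume "S F"
    then consider (a) g where "smooth_on m V g" "F = (\<lambda>x. g (x \<circ> \<sigma>))" | (b) c where "F = (\<lambda>_. c)"
      unfolding S_def by blast
    then show "loc n F \<and> continuous_on {x. V (x \<circ> \<sigma>)} F \<and> pdiff n (\<lambda>x. V (x \<circ> \<sigma>)) F \<and>
        (\<forall>i<n. \<exists>f'. S f' \<and> (\<forall>x. V (x \<circ> \<sigma>) \<longrightarrow> pd i F x = f' x))"
    proof cases
      case (a g)
      have lg: "loc m g" by (rule smooth_on_loc[OF a(1)])
      have L: "loc n F" unfolding loc_def a(2)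
      proof (intro allI impI)
        fix x y :: "nat \<Rightarrow> real" assume "\<forall>i<n. x i = y i"
        then have "\<forall>j<m. (x \<circ> \<sigma>) j = (y \<circ> \<sigma>) j" using sig by simp
        then show "g (x \<circ> \<sigma>) = g (y \<circ> \<sigma>)" using lg unfolding loc_def by blast
      qed
      have C: "continuous_on {x. V (x \<circ> \<sigma>)} F" unfolding a(2)
        by (rule continuous_on_compose2[OF smooth_on_cont[OF a(1)] continuous_on_subset[OF cont_comp_sigma]]) auto
      have K: "\<forall>i<n. \<exists>f'. S f' \<and> (\<forall>x. V (x \<circ> \<sigma>) \<longrightarrow> ((\<lambda>t. F (x(i:=t))) has_real_derivative f' x) (at (x i)))"
      proof (intro allI impI)
        fix i assume "i < n"
        show "\<exists>f'. S f' \<and> (\<forall>x. V (x \<circ> \<sigma>) \<longrightarrow> ((\<lambda>t. F (x(i:=t))) has_real_derivative f' x) (at (x i)))"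
        proof (cases "\<exists>j<m. \<sigma> j = i")
          case True
          then obtain j where j: "j < m" "\<sigma> j = i" by blast
          have eq: "g ((x(i:=t)) \<circ> \<sigma>) = g ((x \<circ> \<sigma>)(j:=t))" for x t
          proof -
            have "\<forall>l<m. ((x(i:=t)) \<circ> \<sigma>) l = ((x \<circ> \<sigma>)(j:=t)) l"
            proof (intro allI impI)
              fix l assume "l < m"
              have "\<sigma> l = i \<longleftrightarrow> l = j" using inj j \<open>l < m\<close> unfolding inj_on_def by auto
              then show "((x(i:=t)) \<circ> \<sigma>) l = ((x \<circ> \<sigma>)(j:=t)) l" by simp
            qed
            then show ?thesis using lg unfolding loc_def by blast
          qed
          have sp: "smooth_on m V (pd j g)" by (rule smooth_on_pd[OF a(1) j(1)])
          show ?thesis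
          proof (rule exI[of _ "\<lambda>x. pd j g (x \<circ> \<sigma>)"], intro conjI allI impI)
            show "S (\<lambda>x. pd j g (x \<circ> \<sigma>))" unfolding S_def using sp by blast
            fix x assume Vx: "V (x \<circ> \<sigma>)"
            have "((\<lambda>t. g ((x \<circ> \<sigma>)(j:=t))) has_real_derivative pd j g (x \<circ> \<sigma>)) (at ((x \<circ> \<sigma>) j))"
              by (rule pdiff_D[OF smooth_on_pdiff[OF a(1)] Vx j(1)])
            then show "((\<lambda>t. F (x(i:=t))) has_real_derivative pd j g (x \<circ> \<sigma>)) (at (x i))"
              unfolding a(2) eq using j(2) by simp
          qed
        next
          case False
          have eq: "g ((x(i:=t)) \<circ> \<sigma>) = g (x \<circ> \<sigma>)" for x t
          proof -
            have "\<forall>l<m. ((x(i:=t)) \<circ> \<sigma>) l = (x \<circ> \<sigma>) l" using False by auto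
            then show ?thesis using lg unfolding loc_def by blast
          qed
          show ?thesis
          proof (rule exI[of _ "\<lambda>_. 0"], intro conjI allI impI)
            show "S (\<lambda>_. 0)" by (rule S0)
            fix x
            show "((\<lambda>t. F (x(i:=t))) has_real_derivative 0) (at (x i))"
              unfolding a(2) eq by (rule DERIV_const)
          qed
        qed
      qed
      show ?thesis using L C key_pdiff[OF K] key_pd[OF K] by blast
    next
      case (b c)
      have K: "\<forall>i<n. \<exists>f'. S f' \<and> (\<forall>x. V (x \<circ> \<sigma>) \<longrightarrow> ((\<lambda>t. F (x(i:=t))) has_real_derivative f' x) (at (x i)))"
      proof (intro allI impI)
        fix i assume "i < n"
        show "\<exists>f'. S f' \<and> (\<forall>x. V (x \<circ> \<sigma>) \<longrightarrow> ((\<lambda>t. F (x(i:=t))) has_real_derivative f' x) (at (x i)))"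
          by (rule exI[of _ "\<lambda>_. 0"], intro conjI allI impI S0) (simp add: b DERIV_const)
      qed
      have L: "loc n F" unfolding loc_def b by simp
      have C: "continuous_on {x. V (x \<circ> \<sigma>)} F" unfolding b by (rule continuous_on_const)
      show ?thesis using L C key_pdiff[OF K] key_pd[OF K] by blast
    qed
  qed
qed


definition smooth1 :: "real set \<Rightarrow> (real \<Rightarrow> real) \<Rightarrow> bool" where
  "smooth1 W w \<longleftrightarrow> (\<exists>S. w \<in> S \<and> (\<forall>a\<in>S. \<exists>a'\<in>S. \<forall>s\<in>W. (a has_real_derivative a' s) (at s)))"

lemma smooth1_cont: assumes "\<forall>s\<in>W. (a has_real_derivative a' s) (at s)" shows "continuous_on W a"
proof (rule continuous_at_imp_continuous_on, intro ballI)
  fix s assume "s \<in> W" then show "isCont a s" using assms DERIV_isCont by blast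
qed

lemma good_intro:
  assumes "loc n F" "continuous_on {x. U x} F"
    "\<forall>i<n. \<exists>f'. f' \<in> C \<and> (\<forall>x. U x \<longrightarrow> ((\<lambda>t. F (x(i:=t))) has_real_derivative f' x) (at (x i)))"
  shows "good n U C F"
  unfolding good_def Bex_def using assms key_pdiff[OF assms(3)] key_pd[OF assms(3)] by blast

lemma smooth_comp1:
  assumes oW: "open W" and oU: "open {x. U x}" and w: "smooth1 W w" and g: "smooth_on n U g"
    and gW: "\<forall>x. U x \<longrightarrow> g x \<in> W"
  shows "smooth_on n U (\<lambda>x. w (g x))"
proof -
  obtain S where wS: "w \<in> S" and SD: "\<forall>a\<in>S. \<exists>a'\<in>S. \<forall>s\<in>W. (a has_real_derivative a' s) (at s)"
    using w unfolding smooth1_def by blast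
  define G where "G = (\<lambda>a. \<lambda>x. a (g x)) ` S"
  have lg: "loc n g" by (rule smooth_on_loc[OF g])
  have HG: "good n U (clos n U G) F" if "F \<in> G" for F
  proof -
    obtain a where a: "a \<in> S" "F = (\<lambda>x. a (g x))" using \<open>F \<in> G\<close> unfolding G_def by blast
    obtain a' where a': "a' \<in> S" "\<forall>s\<in>W. (a has_real_derivative a' s) (at s)" using SD a(1) by blast
    have L: "loc n F" unfolding a(2) loc_def
    proof (intro allI impI)
      fix x y :: "nat\<Rightarrow>real" assume "\<forall>i<n. x i = y i"
      then have "g x = g y" using lg unfolding loc_def by blast
      then show "a (g x) = a (g y)" by simp
    qed
    have C: "continuous_on {x. U x} F" unfolding a(2)
      by (rule continuous_on_compose2[OF smooth1_cont[OF a'(2)] smooth_on_cont[OF g]]) (use gW in auto)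
    have K: "\<forall>i<n. \<exists>f'. f' \<in> clos n U G \<and> (\<forall>x. U x \<longrightarrow> ((\<lambda>t. F (x(i:=t))) has_real_derivative f' x) (at (x i)))"
    proof (intro allI impI)
      fix i assume i: "i < n"
      show "\<exists>f'. f' \<in> clos n U G \<and> (\<forall>x. U x \<longrightarrow> ((\<lambda>t. F (x(i:=t))) has_real_derivative f' x) (at (x i)))"
      proof (rule exI[of _ "\<lambda>x. a' (g x) * pd i g x"], intro conjI allI impI)
        have "(\<lambda>x. a' (g x)) \<in> G" unfolding G_def using a'(1) by blast
        then show "(\<lambda>x. a' (g x) * pd i g x) \<in> clos n U G"
          by (intro clos.mul clos.gen clos.base smooth_on_pd[OF g i])
        fix x assume Ux: "U x"
        have d1: "DERIV a (g (x(i := x i))) :> a' (g x)" using a'(2) gW Ux by simp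
        have d2: "((\<lambda>t. g (x(i:=t))) has_real_derivative pd i g x) (at (x i))"
          by (rule pdiff_D[OF smooth_on_pdiff[OF g] Ux i])
        show "((\<lambda>t. F (x(i:=t))) has_real_derivative a' (g x) * pd i g x) (at (x i))"
          unfolding a(2) using DERIV_chain2[OF d1 d2] by simp
      qed
    qed
    show ?thesis by (rule good_intro[OF L C K])
  qed
  have M: "(\<lambda>x. w (g x)) \<in> clos n U G" unfolding G_def using wS by (intro clos.gen) blast
  show ?thesis
  proof (rule clos_smooth[OF oU])
    fix f assume "f \<in> G" then show "good n U (clos n U G) f" by (rule HG)
  qed (rule M)
qed

lemma smooth_subst_self:
  assumes oW: "open W" and oU: "open {x. U x}" and oV: "open {x. V x}" and w: "smooth1 W w"
    and h: "smooth_on n V h" and k: "k < n"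
    and UV: "\<forall>x. U x \<longrightarrow> x k \<in> W \<and> V (x(k := w (x k)))"
  shows "smooth_on n U (\<lambda>x. h (x(k := w (x k))))"
proof -
  obtain S where wS: "w \<in> S" and SD: "\<forall>a\<in>S. \<exists>a'\<in>S. \<forall>s\<in>W. (a has_real_derivative a' s) (at s)"
    using w unfolding smooth1_def by blast
  obtain w' where w': "w' \<in> S" "\<forall>s\<in>W. (w has_real_derivative w' s) (at s)" using SD wS by blast
  have s1: "smooth1 W w'" unfolding smooth1_def using w' SD by blast
  have sw': "smooth_on n U (\<lambda>x. w' (x k))"
    by (rule smooth_comp1[OF oW oU s1 smooth_proj[OF oU k]]) (use UV in blast)
  have cw: "continuous_on W w" by (rule smooth1_cont[OF w'(2)])
  define G where "G = (\<lambda>h. \<lambda>x. h (x(k := w (x k)))) ` {h. smooth_on n V h}"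
  have cphi: "continuous_on {x. U x} (\<lambda>x. x(k := w (x k)))"
  proof (intro continuous_on_coordinatewise_then_product)
    fix j show "continuous_on {x. U x} (\<lambda>x. (x(k := w (x k))) j)"
    proof (cases "j = k")
      case True
      have "continuous_on {x. U x} (\<lambda>x. w (x k))"
        by (rule continuous_on_compose2[OF cw continuous_on_subset[OF continuous_on_product_coordinates]])
           (use UV in auto)
      then show ?thesis using True by simp
    next
      case False
      then show ?thesis by (simp add: continuous_on_subset[OF continuous_on_product_coordinates])
    qed
  qed
  have HG: "good n U (clos n U G) F" if "F \<in> G" for F
  proof -
    obtain h1 where h1: "smooth_on n V h1" "F = (\<lambda>x. h1 (x(k := w (x k))))"
      using \<open>F \<in> G\<close> unfolding G_def by blast
    have lh: "loc n h1" by (rule smooth_on_loc[OF h1(1)])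
    have L: "loc n F" unfolding h1(2) loc_def
    proof (intro allI impI)
      fix x y :: "nat\<Rightarrow>real" assume a: "\<forall>i<n. x i = y i"
      then have "\<forall>i<n. (x(k := w (x k))) i = (y(k := w (y k))) i" using k by simp
      then show "h1 (x(k := w (x k))) = h1 (y(k := w (y k)))" using lh unfolding loc_def by blast
    qed
    have C: "continuous_on {x. U x} F" unfolding h1(2)
      by (rule continuous_on_compose2[OF smooth_on_cont[OF h1(1)] cphi]) (use UV in auto)
    have K: "\<forall>i<n. \<exists>f'. f' \<in> clos n U G \<and> (\<forall>x. U x \<longrightarrow> ((\<lambda>t. F (x(i:=t))) has_real_derivative f' x) (at (x i)))"
    proof (intro allI impI)
      fix i assume i: "i < n"
      show "\<exists>f'. f' \<in> clos n U G \<and> (\<forall>x. U x \<longrightarrow> ((\<lambda>t. F (x(i:=t))) has_real_derivative f' x) (at (x i)))"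
      proof (cases "i = k")
        case False
        show ?thesis
        proof (rule exI[of _ "\<lambda>x. pd i h1 (x(k := w (x k)))"], intro conjI allI impI)
          have "(\<lambda>x. pd i h1 (x(k := w (x k)))) \<in> G" unfolding G_def
            using smooth_on_pd[OF h1(1) i] by blast
          then show "(\<lambda>x. pd i h1 (x(k := w (x k)))) \<in> clos n U G" by (rule clos.gen)
          fix x assume Ux: "U x"
          have VV: "V (x(k := w (x k)))" using UV Ux by blast
          have d: "((\<lambda>t. h1 ((x(k := w (x k)))(i:=t))) has_real_derivative pd i h1 (x(k := w (x k))))
                 (at ((x(k := w (x k))) i))"
            by (rule pdiff_D[OF smooth_on_pdiff[OF h1(1)] VV i])
          have e: "(\<lambda>t. F (x(i:=t))) = (\<lambda>t. h1 ((x(k := w (x k)))(i:=t)))"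
            unfolding h1(2) using False by (intro ext) (simp add: fun_upd_twist)
          show "((\<lambda>t. F (x(i:=t))) has_real_derivative pd i h1 (x(k := w (x k)))) (at (x i))"
            unfolding e using d False by simp
        qed
      next
        case True
        show ?thesis
        proof (rule exI[of _ "\<lambda>x. pd k h1 (x(k := w (x k))) * w' (x k)"], intro conjI allI impI)
          have "(\<lambda>x. pd k h1 (x(k := w (x k)))) \<in> G" unfolding G_def
            using smooth_on_pd[OF h1(1) k] by blast
          then show "(\<lambda>x. pd k h1 (x(k := w (x k))) * w' (x k)) \<in> clos n U G"
            by (intro clos.mul clos.gen clos.base sw')
          fix x assume Ux: "U x"
          have VV: "V (x(k := w (x k)))" using UV Ux by blast
          have d: "((\<lambda>s. h1 ((x(k := w (x k)))(k:=s))) has_real_derivative pd k h1 (x(k := w (x k))))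
                 (at ((x(k := w (x k))) k))"
            by (rule pdiff_D[OF smooth_on_pdiff[OF h1(1)] VV k])
          then have d1: "DERIV (\<lambda>s. h1 ((x(k := w (x k)))(k:=s))) (w (x k)) :> pd k h1 (x(k := w (x k)))"
            by simp
          have d2: "(w has_real_derivative w' (x k)) (at (x k))" using w'(2) UV Ux by blast
          have e: "(\<lambda>t. F (x(i:=t))) = (\<lambda>t. h1 ((x(k := w (x k)))(k:= w t)))"
            unfolding h1(2) using True by (intro ext) simp
          show "((\<lambda>t. F (x(i:=t))) has_real_derivative pd k h1 (x(k := w (x k))) * w' (x k)) (at (x i))"
            unfolding e using DERIV_chain2[OF d1 d2] True by simp
        qed
      qed
    qed
    show ?thesis by (rule good_intro[OF L C K])
  qed
  have M: "(\<lambda>x. h (x(k := w (x k)))) \<in> clos n U G" unfolding G_def using h by (intro clos.gen) blast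
  show ?thesis
  proof (rule clos_smooth[OF oU])
    fix f assume "f \<in> G" then show "good n U (clos n U G) f" by (rule HG)
  qed (rule M)
qed


lemma exp_poly_lim: "((\<lambda>y. poly P y * exp (- y)) \<longlongrightarrow> (0::real)) at_top"
proof -
  have eq: "poly P y * exp (- y) = (\<Sum>i\<le>degree P. coeff P i * (y ^ i / exp y))" for y :: real
    by (simp add: poly_altdef sum_distrib_right exp_minus divide_inverse mult.assoc)
  have "((\<lambda>y. \<Sum>i\<le>degree P. coeff P i * (y ^ i / exp y)) \<longlongrightarrow> (0::real)) at_top"
    by (intro tendsto_null_sum tendsto_mult_right_zero tendsto_power_div_exp_0)
  then show ?thesis unfolding eq .
qed

definition thP :: "real poly \<Rightarrow> real \<Rightarrow> real" where
  "thP P s = (if 0 < s then poly P (inverse s) * exp (- inverse s) else 0)"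

definition thQ :: "real poly \<Rightarrow> real poly" where
  "thQ P = [:0, 0, 1:] * (P - pderiv P)"

lemma thP_deriv_pos:
  assumes s: "0 < s" shows "DERIV (thP P) s :> thP (thQ P) s"
proof -
  have d1: "DERIV (\<lambda>s. poly P (inverse s)) s :> poly (pderiv P) (inverse s) * (- (inverse s ^ Suc (Suc 0)))"
    by (rule DERIV_chain2[OF poly_DERIV DERIV_inverse]) (use s in simp)
  have d2: "DERIV (\<lambda>s. exp (- inverse s)) s :> exp (- inverse s) * (- (- (inverse s ^ Suc (Suc 0))))"
    by (rule DERIV_chain2[OF DERIV_exp DERIV_minus[OF DERIV_inverse]]) (use s in simp)
  have d3: "DERIV (\<lambda>s. poly P (inverse s) * exp (- inverse s)) s :>
      poly (pderiv P) (inverse s) * (- (inverse s ^ Suc (Suc 0))) * exp (- inverse s)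
      + exp (- inverse s) * (- (- (inverse s ^ Suc (Suc 0)))) * poly P (inverse s)"
    using DERIV_mult[OF d1 d2] by (simp add: algebra_simps)
  have val: "poly (pderiv P) (inverse s) * (- (inverse s ^ Suc (Suc 0))) * exp (- inverse s)
      + exp (- inverse s) * (- (- (inverse s ^ Suc (Suc 0)))) * poly P (inverse s) = thP (thQ P) s"
    using s by (simp add: thP_def thQ_def poly_mult algebra_simps)
  have "DERIV (thP P) s :> poly (pderiv P) (inverse s) * (- (inverse s ^ Suc (Suc 0))) * exp (- inverse s)
      + exp (- inverse s) * (- (- (inverse s ^ Suc (Suc 0)))) * poly P (inverse s)"
    by (rule has_field_derivative_transform_within_open[OF d3, of "{0<..}"]) (use s in \<open>auto simp: thP_def\<close>)
  then show ?thesis unfolding val .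
qed

lemma thP_deriv_neg:
  assumes s: "s < 0" shows "DERIV (thP P) s :> thP (thQ P) s"
proof -
  have "DERIV (thP P) s :> 0"
  proof (rule has_field_derivative_transform_within_open[where S="{..<0}"])
    show "DERIV (\<lambda>_. 0) s :> 0" by simp
  qed (use s in \<open>auto simp: thP_def\<close>)
  then show ?thesis using s by (simp add: thP_def)
qed

lemma thP_deriv_zero: "DERIV (thP P) 0 :> thP (thQ P) 0"
proof -
  have "((\<lambda>y. (thP P y - thP P 0) / (y - 0)) \<longlongrightarrow> 0) (at (0::real))"
  proof (rule filterlim_split_at)
    have ev: "eventually (\<lambda>y::real. y < 0) (at_left 0)"
      by (simp add: eventually_at_filter)
    show "((\<lambda>y. (thP P y - thP P 0) / (y - 0)) \<longlongrightarrow> 0) (at_left (0::real))"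
      by (rule tendsto_eventually, rule eventually_mono[OF ev]) (simp add: thP_def)
  next
    have lim: "((\<lambda>y. poly (pCons 0 P) (inverse y) * exp (- inverse y)) \<longlongrightarrow> 0) (at_right (0::real))"
      by (rule filterlim_compose[OF exp_poly_lim filterlim_inverse_at_top_right])
    have ev: "eventually (\<lambda>y::real. poly (pCons 0 P) (inverse y) * exp (- inverse y) = (thP P y - thP P 0) / (y - 0)) (at_right 0)"
      by (rule eventually_mono[OF eventually_at_right_less]) (simp add: thP_def divide_inverse mult_ac)
    show "((\<lambda>y. (thP P y - thP P 0) / (y - 0)) \<longlongrightarrow> 0) (at_right (0::real))"
      by (rule Lim_transform_eventually[OF lim ev])
  qed
  then have "DERIV (thP P) 0 :> 0" by (simp add: has_field_derivative_iff)
  then show ?thesis by (simp add: thP_def)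
qed

lemma thP_deriv: "DERIV (thP P) s :> thP (thQ P) s"
  using thP_deriv_pos thP_deriv_neg thP_deriv_zero by (cases "s < 0"; cases "s = 0"; force)

lemma smooth1_thP: "smooth1 UNIV (thP P)"
  unfolding smooth1_def
proof (rule exI[of _ "range thP"], intro conjI ballI)
  show "thP P \<in> range thP" by simp
  fix a assume "a \<in> range thP"
  then obtain Q where "a = thP Q" by blast
  then show "\<exists>a'\<in>range thP. \<forall>s\<in>UNIV. (a has_real_derivative a' s) (at s)"
    using thP_deriv by blast
qed

lemma DERIV_cinvp: assumes s: "s \<noteq> 0"
  shows "DERIV (\<lambda>s. c * inverse s ^ p) s :> (- c * real p) * inverse s ^ Suc p"
proof -
  have "DERIV (\<lambda>s. inverse s ^ p) s :> real p * (inverse s ^ (p - Suc 0)) * (- (inverse s ^ Suc (Suc 0)))"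
    by (rule DERIV_chain2[OF DERIV_pow DERIV_inverse[OF s]])
  then have "DERIV (\<lambda>s. c * inverse s ^ p) s :> c * (real p * (inverse s ^ (p - Suc 0)) * (- (inverse s ^ Suc (Suc 0))))"
    by (rule DERIV_cmult)
  moreover have "c * (real p * (inverse s ^ (p - Suc 0)) * (- (inverse s ^ Suc (Suc 0)))) = (- c * real p) * inverse s ^ Suc p"
    by (cases p) (simp_all add: algebra_simps power_Suc)
  ultimately show ?thesis by (metis (no_types, lifting))
qed

lemma smooth1_inverse: "smooth1 (-{0}) inverse"
  unfolding smooth1_def
proof (rule exI[of _ "{f. \<exists>c p. f = (\<lambda>s::real. c * inverse s ^ p)}"], intro conjI ballI)
  have e: "inverse = (\<lambda>s::real. 1 * inverse s ^ 1)" by (rule ext) simp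
  show "inverse \<in> {f. \<exists>c p. f = (\<lambda>s::real. c * inverse s ^ p)}"
    unfolding mem_Collect_eq using e by blast
  fix a assume "a \<in> {f. \<exists>c p. f = (\<lambda>s::real. c * inverse s ^ p)}"
  then obtain c p where a: "a = (\<lambda>s. c * inverse s ^ p)" by auto
  show "\<exists>a'\<in>{f. \<exists>c p. f = (\<lambda>s::real. c * inverse s ^ p)}. \<forall>s\<in>- {0}. (a has_real_derivative a' s) (at s)"
  proof (rule bexI[of _ "\<lambda>s. (- c * real p) * inverse s ^ Suc p"])
    show "\<forall>s\<in>- {0}. (a has_real_derivative - c * real p * inverse s ^ Suc p) (at s)"
      unfolding a using DERIV_cinvp by auto
    show "(\<lambda>s. - c * real p * inverse s ^ Suc p) \<in> {f. \<exists>c p. f = (\<lambda>s::real. c * inverse s ^ p)}"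
      unfolding mem_Collect_eq by (rule exI[of _ "- c * real p"], rule exI[of _ "Suc p"], rule refl)
  qed
qed


lemma open_Uk: "open {t::real. U t} \<Longrightarrow> open {x::nat\<Rightarrow>real. U (x k)}"
proof -
  assume o: "open {t. U t}"
  have "{x::nat\<Rightarrow>real. U (x k)} = (\<lambda>x. x k) -` {t. U t}" by auto
  then show ?thesis using open_vimage[OF o continuous_on_product_coordinates] by simp
qed

lemma open_True: "open {x::nat\<Rightarrow>real. True}" by simp

lemma smooth_scale: "open {x. U x} \<Longrightarrow> smooth_on n U f \<Longrightarrow> smooth_on n U (\<lambda>x. a * f x)"
  by (rule smooth_mult[OF _ smooth_const]) auto

lemma smooth_diff: assumes o: "open {x. U x}" and f: "smooth_on n U f" and g: "smooth_on n U g"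
  shows "smooth_on n U (\<lambda>x. f x - g x)"
proof -
  have "smooth_on n U (\<lambda>x. f x + (-1) * g x)" by (rule smooth_add[OF o f smooth_scale[OF o g]])
  then show ?thesis by simp
qed

lemma smooth_mono_n: assumes o: "open {x. V x}" and s: "smooth_on m V f" and mn: "m \<le> n"
  shows "smooth_on n V f"
proof -
  have "smooth_on n (\<lambda>x. V (x \<circ> id)) (\<lambda>x. f (x \<circ> id))"
    by (rule smooth_reindex[OF o s]) (use mn in auto)
  then show ?thesis by simp
qed

definition th :: "real \<Rightarrow> real" where "th = thP 1"

lemma th_eq: "th s = (if 0 < s then exp (- inverse s) else 0)"
  unfolding th_def thP_def by simp

lemma smooth1_th: "smooth1 UNIV th" unfolding th_def by (rule smooth1_thP)

definition Dn :: "real \<Rightarrow> real" where "Dn u = 1 - u + 16 * u * th (u - 1/2)"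

definition rho :: "real \<Rightarrow> real" where "rho u = 16 * u * th (u - 1/2) * inverse (Dn u)"

lemma th_nonneg: "0 \<le> th s" by (simp add: th_eq)

lemma th_ge: assumes "1/2 \<le> s" shows "1/9 \<le> th s"
proof -
  have s0: "0 < s" using assms by simp
  have "inverse s \<le> inverse (1/2::real)" by (rule le_imp_inverse_le[OF assms]) simp
  then have "inverse s \<le> 2" by simp
  then have e1: "exp (-2) \<le> exp (- inverse s)" by simp
  moreover have "exp (2::real) \<le> 9"
  proof -
    have "exp (2::real) = exp 1 * exp 1" by (simp flip: exp_add)
    also have "\<dots> \<le> 3 * 3" using exp_le by (intro mult_mono) auto
    finally show ?thesis by simp
  qed
  then have e2: "1/9 \<le> exp (-2::real)" by (simp add: exp_minus field_simps)
  have "th s = exp (- inverse s)" using s0 by (simp add: th_eq)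
  then show ?thesis using e1 e2 by linarith
qed

lemma Dn_pos: "0 < Dn u"
proof (cases "u < 1")
  case True
  have "0 \<le> 16 * u * th (u - 1/2)"
  proof (cases "u \<le> 1/2")
    case True then show ?thesis by (simp add: th_eq)
  next
    case False then show ?thesis using th_nonneg[of "u - 1/2"] by simp
  qed
  then show ?thesis using True unfolding Dn_def by simp
next
  case False
  then have "1/9 \<le> th (u - 1/2)" by (intro th_ge) simp
  then have h: "16 * u * (1/9) \<le> 16 * u * th (u - 1/2)" using False by (intro mult_left_mono) auto
  show ?thesis unfolding Dn_def using h False by linarith
qed

lemma rho_small: "u \<le> 1/2 \<Longrightarrow> rho u = 0"
  unfolding rho_def by (simp add: th_eq)

lemma rho_id: "1 + (u - 1) * inverse (Dn u) = rho u"
proof -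
  have "Dn u \<noteq> 0" using Dn_pos[of u] by simp
  then show ?thesis unfolding rho_def using Dn_def[of u] by (simp add: field_simps)
qed

lemma smooth_th_comp: assumes o: "open {x. U x}" and g: "smooth_on n U g"
  shows "smooth_on n U (\<lambda>x. th (g x - 1/2))"
  by (rule smooth_comp1[OF open_UNIV o smooth1_th smooth_diff[OF o g smooth_const[OF o]]]) simp

lemma smooth_Dn_comp: assumes o: "open {x. U x}" and g: "smooth_on n U g"
  shows "smooth_on n U (\<lambda>x. Dn (g x))"
proof -
  have "smooth_on n U (\<lambda>x. (1 - g x) + (16 * g x) * th (g x - 1/2))"
    by (intro smooth_add[OF o] smooth_diff[OF o] smooth_const[OF o] g smooth_mult[OF o]
        smooth_scale[OF o] smooth_th_comp[OF o])
  then show ?thesis unfolding Dn_def by (simp add: mult.assoc)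
qed

lemma smooth_invDn_comp: assumes o: "open {x. U x}" and g: "smooth_on n U g"
  shows "smooth_on n U (\<lambda>x. inverse (Dn (g x)))"
proof (rule smooth_comp1[OF _ o smooth1_inverse smooth_Dn_comp[OF o g]])
  show "\<forall>x. U x \<longrightarrow> Dn (g x) \<in> - {0}"
  proof (intro allI impI)
    fix x have "0 < Dn (g x)" by (rule Dn_pos)
    then show "Dn (g x) \<in> - {0}" by simp
  qed
qed (intro open_Compl closed_singleton)

lemma smooth_rho_comp: assumes o: "open {x. U x}" and g: "smooth_on n U g"
  shows "smooth_on n U (\<lambda>x. rho (g x))"
proof -
  have "smooth_on n U (\<lambda>x. (16 * g x) * th (g x - 1/2) * inverse (Dn (g x)))"
    by (intro smooth_mult[OF o] smooth_scale[OF o] g smooth_th_comp[OF o] smooth_invDn_comp[OF o])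
  then show ?thesis unfolding rho_def by (simp add: mult.assoc)
qed

lemma smooth_prod2: assumes o: "open {x. U x}" and a: "a < n" and b: "b < n"
  shows "smooth_on n U (\<lambda>x. x a * x b)"
  by (rule smooth_mult[OF o smooth_proj[OF o a] smooth_proj[OF o b]])


lemma open_nz: "open {t::real. t \<noteq> 0}"
  using open_Collect_neq[of "\<lambda>t::real. t" "\<lambda>_. 0"] by (simp add: continuous_on_id)

lemma locD: "loc n f \<Longrightarrow> (\<forall>i<n. x i = y i) \<Longrightarrow> f x = f y"
  unfolding loc_def by blast

lemma adm_const: "open {t. U t} \<Longrightarrow> cp_adm B U (\<lambda>\<phi> t. c)"
  unfolding cp_adm_def
  by (rule exI[of _ 0], rule exI[of _ "\<lambda>_. c"], rule exI[of _ "\<lambda>_. undefined"])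
     (simp add: smooth_const open_Uk)

lemma adm_merge:
  assumes oU: "open {t. U t}" and a1: "cp_adm B U F1" and a2: "cp_adm B U F2"
  shows "\<exists>k c h1 h2. (\<forall>i<k. c i \<in> B) \<and> smooth_on (Suc k) (\<lambda>x. U (x k)) h1 \<and>
     smooth_on (Suc k) (\<lambda>x. U (x k)) h2 \<and>
     (\<forall>\<phi> t. U t \<longrightarrow> F1 \<phi> t = h1 (\<lambda>i. if i < k then \<phi> (c i) else t) \<and>
                   F2 \<phi> t = h2 (\<lambda>i. if i < k then \<phi> (c i) else t))"
proof -
  obtain k1 g1 c1 where c1: "\<forall>i<k1. c1 i \<in> B" and g1: "smooth_on (Suc k1) (\<lambda>x. U (x k1)) g1"
    and r1: "\<forall>\<phi> t. U t \<longrightarrow> F1 \<phi> t = g1 (\<lambda>i. if i < k1 then \<phi> (c1 i) else t)"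
    using a1 unfolding cp_adm_def by blast
  obtain k2 g2 c2 where c2: "\<forall>i<k2. c2 i \<in> B" and g2: "smooth_on (Suc k2) (\<lambda>x. U (x k2)) g2"
    and r2: "\<forall>\<phi> t. U t \<longrightarrow> F2 \<phi> t = g2 (\<lambda>i. if i < k2 then \<phi> (c2 i) else t)"
    using a2 unfolding cp_adm_def by blast
  define k where "k = k1 + k2"
  define c where "c = (\<lambda>i. if i < k1 then c1 i else c2 (i - k1))"
  define s1 where "s1 = (\<lambda>i::nat. if i < k1 then i else k)"
  define s2 where "s2 = (\<lambda>i::nat. i + k1)"
  have o1: "open {x::nat\<Rightarrow>real. U (x k1)}" by (rule open_Uk[OF oU])
  have o2: "open {x::nat\<Rightarrow>real. U (x k2)}" by (rule open_Uk[OF oU])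
  have A: "smooth_on (Suc k) (\<lambda>x. U ((x \<circ> s1) k1)) (\<lambda>x. g1 (x \<circ> s1))"
    by (rule smooth_reindex[OF o1 g1]) (auto simp: s1_def k_def inj_on_def)
  have B: "smooth_on (Suc k) (\<lambda>x. U ((x \<circ> s2) k2)) (\<lambda>x. g2 (x \<circ> s2))"
    by (rule smooth_reindex[OF o2 g2]) (auto simp: s2_def k_def inj_on_def)
  have e1: "(\<lambda>x::nat\<Rightarrow>real. U ((x \<circ> s1) k1)) = (\<lambda>x. U (x k))" by (simp add: s1_def)
  have e2: "(\<lambda>x::nat\<Rightarrow>real. U ((x \<circ> s2) k2)) = (\<lambda>x. U (x k))" by (simp add: s2_def k_def add.commute)
  have cB: "\<forall>i<k. c i \<in> B" using c1 c2 by (auto simp: c_def k_def)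
  have R: "\<forall>\<phi> t. U t \<longrightarrow> F1 \<phi> t = g1 ((\<lambda>i. if i < k then \<phi> (c i) else t) \<circ> s1) \<and>
                   F2 \<phi> t = g2 ((\<lambda>i. if i < k then \<phi> (c i) else t) \<circ> s2)"
  proof (intro allI impI conjI)
    fix \<phi> t assume Ut: "U t"
    have l1: "loc (Suc k1) g1" by (rule smooth_on_loc[OF g1])
    have l2: "loc (Suc k2) g2" by (rule smooth_on_loc[OF g2])
    have "\<forall>i<Suc k1. ((\<lambda>i. if i < k then \<phi> (c i) else t) \<circ> s1) i = (\<lambda>i. if i < k1 then \<phi> (c1 i) else t) i"
    proof (intro allI impI)
      fix i assume i: "i < Suc k1"
      show "((\<lambda>i. if i < k then \<phi> (c i) else t) \<circ> s1) i = (\<lambda>i. if i < k1 then \<phi> (c1 i) else t) i"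
      proof (cases "i < k1")
        case True then show ?thesis by (simp add: s1_def c_def k_def)
      next
        case False then show ?thesis by (simp add: s1_def)
      qed
    qed
    then have "g1 ((\<lambda>i. if i < k then \<phi> (c i) else t) \<circ> s1) = g1 (\<lambda>i. if i < k1 then \<phi> (c1 i) else t)"
      by (rule locD[OF l1])
    then show "F1 \<phi> t = g1 ((\<lambda>i. if i < k then \<phi> (c i) else t) \<circ> s1)" using r1 Ut by simp
    have "\<forall>i<Suc k2. ((\<lambda>i. if i < k then \<phi> (c i) else t) \<circ> s2) i = (\<lambda>i. if i < k2 then \<phi> (c2 i) else t) i"
    proof (intro allI impI)
      fix i assume i: "i < Suc k2"
      show "((\<lambda>i. if i < k then \<phi> (c i) else t) \<circ> s2) i = (\<lambda>i. if i < k2 then \<phi> (c2 i) else t) i"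
      proof (cases "i < k2")
        case True then show ?thesis by (simp add: s2_def c_def k_def)
      next
        case False then show ?thesis by (simp add: s2_def k_def)
      qed
    qed
    then have "g2 ((\<lambda>i. if i < k then \<phi> (c i) else t) \<circ> s2) = g2 (\<lambda>i. if i < k2 then \<phi> (c2 i) else t)"
      by (rule locD[OF l2])
    then show "F2 \<phi> t = g2 ((\<lambda>i. if i < k then \<phi> (c i) else t) \<circ> s2)" using r2 Ut by simp
  qed
  show ?thesis
    apply (rule exI[of _ k], rule exI[of _ c], rule exI[of _ "\<lambda>x. g1 (x \<circ> s1)"], rule exI[of _ "\<lambda>x. g2 (x \<circ> s2)"])
    using cB A B R unfolding e1 e2 by blast
qed

lemma adm_binop:
  assumes oU: "open {t. U t}" and a1: "cp_adm B U F1" and a2: "cp_adm B U F2"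
    and sm: "\<And>n f g. smooth_on n (\<lambda>x. U (x (n - 1))) f \<Longrightarrow> smooth_on n (\<lambda>x. U (x (n - 1))) g \<Longrightarrow>
            smooth_on n (\<lambda>x. U (x (n - 1))) (\<lambda>x. op (f x) (g x))"
  shows "cp_adm B U (\<lambda>\<phi> t. op (F1 \<phi> t) (F2 \<phi> t))"
proof -
  obtain k c h1 h2 where cB: "\<forall>i<k. c i \<in> B" and s1: "smooth_on (Suc k) (\<lambda>x. U (x k)) h1"
    and s2: "smooth_on (Suc k) (\<lambda>x. U (x k)) h2"
    and R: "\<forall>\<phi> t. U t \<longrightarrow> F1 \<phi> t = h1 (\<lambda>i. if i < k then \<phi> (c i) else t) \<and>
                   F2 \<phi> t = h2 (\<lambda>i. if i < k then \<phi> (c i) else t)"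
    using adm_merge[OF oU a1 a2] by blast
  have "smooth_on (Suc k) (\<lambda>x. U (x (Suc k - 1))) (\<lambda>x. op (h1 x) (h2 x))"
    by (rule sm) (use s1 s2 in simp_all)
  then have S: "smooth_on (Suc k) (\<lambda>x. U (x k)) (\<lambda>x. op (h1 x) (h2 x))" by simp
  show ?thesis unfolding cp_adm_def
    by (rule exI[of _ k], rule exI[of _ "\<lambda>x. op (h1 x) (h2 x)"], rule exI[of _ c]) (use cB S R in simp)
qed

lemma adm_mult: "open {t. U t} \<Longrightarrow> cp_adm B U F1 \<Longrightarrow> cp_adm B U F2 \<Longrightarrow>
    cp_adm B U (\<lambda>\<phi> t. F1 \<phi> t * F2 \<phi> t)"
  by (rule adm_binop, assumption+, rule smooth_mult[OF open_Uk], assumption+)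

lemma adm_add: "open {t. U t} \<Longrightarrow> cp_adm B U F1 \<Longrightarrow> cp_adm B U F2 \<Longrightarrow>
    cp_adm B U (\<lambda>\<phi> t. F1 \<phi> t + F2 \<phi> t)"
  by (rule adm_binop, assumption+, rule smooth_add[OF open_Uk], assumption+)

lemma adm_diff: "open {t. U t} \<Longrightarrow> cp_adm B U F1 \<Longrightarrow> cp_adm B U F2 \<Longrightarrow>
    cp_adm B U (\<lambda>\<phi> t. F1 \<phi> t - F2 \<phi> t)"
  by (rule adm_binop, assumption+, rule smooth_diff[OF open_Uk], assumption+)


lemma adm_scale: "open {t. U t} \<Longrightarrow> cp_adm B U F \<Longrightarrow> cp_adm B U (\<lambda>\<phi> t. a * F \<phi> t)"
  using adm_mult[OF _ adm_const] by blast

lemma open_nzk: "open {x::nat\<Rightarrow>real. x k \<noteq> 0}"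
  using open_Uk[OF open_nz, of k] by simp

lemma adm_rho:
  assumes b: "b \<in> B" and a: "cp_adm B (\<lambda>s. s \<noteq> 0) F'"
  shows "cp_adm B (\<lambda>_. True) (\<lambda>\<phi> t. rho (t * \<phi> b) * F' \<phi> (\<phi> b))"
proof -
  obtain k h c where cB: "\<forall>i<k. c i \<in> B" and h: "smooth_on (Suc k) (\<lambda>x. x k \<noteq> 0) h"
    and r: "\<forall>\<phi> t. t \<noteq> 0 \<longrightarrow> F' \<phi> t = h (\<lambda>i. if i < k then \<phi> (c i) else t)"
    using a unfolding cp_adm_def by blast
  define n where "n = Suc (Suc k)"
  define hh where "hh = (\<lambda>x::nat\<Rightarrow>real. rho (x (Suc k) * x k) * h x)"
  define cc where "cc = c(k := b)"
  have o1: "open {x::nat\<Rightarrow>real. x k \<noteq> 0}" by (rule open_nzk)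
  have S1: "smooth_on n (\<lambda>x. x k \<noteq> 0) h" by (rule smooth_mono_n[OF o1 h]) (simp add: n_def)
  have S2: "smooth_on n (\<lambda>x. x k \<noteq> 0) (\<lambda>x. rho (x (Suc k) * x k))"
    by (rule smooth_rho_comp[OF o1 smooth_prod2[OF o1]]) (simp_all add: n_def)
  have S3: "smooth_on n (\<lambda>x. x k \<noteq> 0) hh" unfolding hh_def by (rule smooth_mult[OF o1 S2 S1])
  have o2: "open {x::nat\<Rightarrow>real. x (Suc k) * x k < 1/2}"
    by (rule open_Collect_less) (intro continuous_on_mult continuous_on_product_coordinates, simp)
  have S4: "smooth_on n (\<lambda>x. x (Suc k) * x k < 1/2) (\<lambda>_. 0)" by (rule smooth_const[OF o2])
  have G: "smooth_on n (\<lambda>x. x k \<noteq> 0 \<or> x (Suc k) * x k < 1/2) hh"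
  proof (rule smooth_glue[OF o1 o2 S3 S4])
    show "\<forall>x. x k \<noteq> 0 \<longrightarrow> hh x = hh x" by simp
    show "\<forall>x. x (Suc k) * x k < 1 / 2 \<longrightarrow> hh x = 0" unfolding hh_def using rho_small by simp
    show "loc n hh" by (rule smooth_on_loc[OF S3])
  qed
  have T: "smooth_on n (\<lambda>x. True) hh"
    by (rule smooth_mono_dom[OF open_True G]) simp
  have R: "\<forall>\<phi> t. True \<longrightarrow> rho (t * \<phi> b) * F' \<phi> (\<phi> b) = hh (\<lambda>i. if i < Suc k then \<phi> (cc i) else t)"
  proof (intro allI impI)
    fix \<phi> :: "'a \<Rightarrow> real" and t :: real
    define X where "X = (\<lambda>i. if i < Suc k then \<phi> (cc i) else t)"
    have X1: "X (Suc k) = t" and X2: "X k = \<phi> b" by (simp_all add: X_def cc_def)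
    show "rho (t * \<phi> b) * F' \<phi> (\<phi> b) = hh X"
    proof (cases "\<phi> b = 0")
      case True
      then show ?thesis unfolding hh_def X1 X2 by (simp add: rho_small)
    next
      case False
      have "\<forall>i<Suc k. X i = (\<lambda>i. if i < k then \<phi> (c i) else \<phi> b) i"
        by (simp add: X_def cc_def)
      then have "h X = h (\<lambda>i. if i < k then \<phi> (c i) else \<phi> b)" by (rule locD[OF smooth_on_loc[OF h]])
      then have "F' \<phi> (\<phi> b) = h X" using r False by simp
      then show ?thesis unfolding hh_def X1 X2 by simp
    qed
  qed
  have cc: "\<forall>i<Suc k. cc i \<in> B" using cB b by (simp add: cc_def)
  show ?thesis unfolding cp_adm_def
    by (rule exI[of _ "Suc k"], rule exI[of _ hh], rule exI[of _ cc]) (use cc T R in \<open>simp add: n_def\<close>)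
qed

lemma adm_invsub:
  assumes a: "cp_adm B (\<lambda>_. True) H"
  shows "cp_adm B (\<lambda>s. s \<noteq> 0) (\<lambda>\<phi> s. H \<phi> (inverse s))"
proof -
  obtain k h c where cB: "\<forall>i<k. c i \<in> B" and h: "smooth_on (Suc k) (\<lambda>x. True) h"
    and r: "\<forall>\<phi> t. H \<phi> t = h (\<lambda>i. if i < k then \<phi> (c i) else t)"
    using a unfolding cp_adm_def by blast
  have S: "smooth_on (Suc k) (\<lambda>x. x k \<noteq> 0) (\<lambda>x. h (x(k := inverse (x k))))"
    by (rule smooth_subst_self[OF _ open_nzk open_True smooth1_inverse h])
       (simp_all add: open_Compl)
  have R: "\<forall>\<phi> s. s \<noteq> 0 \<longrightarrow> H \<phi> (inverse s) = (\<lambda>x. h (x(k := inverse (x k)))) (\<lambda>i. if i < k then \<phi> (c i) else s)"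
  proof (intro allI impI)
    fix \<phi> :: "'a \<Rightarrow> real" and s :: real
    have "\<forall>i<Suc k. ((\<lambda>i. if i < k then \<phi> (c i) else s)(k := inverse s)) i = (\<lambda>i. if i < k then \<phi> (c i) else inverse s) i"
      by simp
    then have "h ((\<lambda>i. if i < k then \<phi> (c i) else s)(k := inverse s)) = h (\<lambda>i. if i < k then \<phi> (c i) else inverse s)"
      by (rule locD[OF smooth_on_loc[OF h]])
    then show "H \<phi> (inverse s) = (\<lambda>x. h (x(k := inverse (x k)))) (\<lambda>i. if i < k then \<phi> (c i) else s)"
      using r by simp
  qed
  show ?thesis unfolding cp_adm_def
    by (rule exI[of _ k], rule exI[of _ "\<lambda>x. h (x(k := inverse (x k)))"], rule exI[of _ c]) (use cB S R in simp)
qed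

lemma adm_inv: "cp_adm B (\<lambda>s. s \<noteq> 0) (\<lambda>\<phi> s. inverse s)"
proof -
  have S: "smooth_on (Suc 0) (\<lambda>x. x 0 \<noteq> 0) (\<lambda>x. inverse (x 0))"
    by (rule smooth_comp1[OF _ open_nzk smooth1_inverse smooth_proj[OF open_nzk]]) (simp_all add: open_Compl)
  show ?thesis unfolding cp_adm_def
    by (rule exI[of _ 0], rule exI[of _ "\<lambda>x. inverse (x 0)"], rule exI[of _ "\<lambda>_. undefined"]) (use S in simp)
qed

lemma adm_invDn:
  assumes b: "b \<in> B"
  shows "cp_adm B (\<lambda>_. True) (\<lambda>\<phi> t. inverse (Dn (t * \<phi> b)))"
proof -
  have S: "smooth_on (Suc 1) (\<lambda>x. True) (\<lambda>x. inverse (Dn (x 1 * x 0)))"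
    by (rule smooth_invDn_comp[OF open_True smooth_prod2[OF open_True]]) simp_all
  show ?thesis unfolding cp_adm_def
    by (rule exI[of _ 1], rule exI[of _ "\<lambda>x. inverse (Dn (x 1 * x 0))"], rule exI[of _ "\<lambda>_. b"]) (use S b in simp)
qed

lemma smooth_lin: "smooth_on (Suc 1) (\<lambda>x. True) (\<lambda>x. x 1 - x 0)"
  by (rule smooth_diff[OF open_True smooth_proj[OF open_True] smooth_proj[OF open_True]]) simp_all

lemma smooth_lin': "smooth_on (Suc 1) (\<lambda>x. True) (\<lambda>x. x 0 - x 1)"
  by (rule smooth_diff[OF open_True smooth_proj[OF open_True] smooth_proj[OF open_True]]) simp_all

lemma adm_lin:
  assumes b: "b \<in> B"
  shows "cp_adm B (\<lambda>_. True) (\<lambda>\<phi> s. s - \<phi> b)"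
  unfolding cp_adm_def
  by (rule exI[of _ 1], rule exI[of _ "\<lambda>x. x 1 - x 0"], rule exI[of _ "\<lambda>_. b"]) (use smooth_lin b in simp)


lemma nil_imp_triv:
  assumes b: "b \<in> B" and nil: "inf_nilpotent B \<Psi> b"
  shows "loc_trivial B \<Psi> b"
proof -
  obtain F where Fa: "cp_adm B (\<lambda>_. True) F" and ev: "cp_eval_is B \<Psi> F b (czero \<Psi>)"
    and inv: "cp_invertible B \<Psi> (\<lambda>t. t \<noteq> 0) F"
    using nil unfolding inf_nilpotent_def by blast
  obtain k h c where cB: "\<forall>i<k. c i \<in> B" and hs: "smooth (Suc k) h"
    and Fr: "\<forall>\<phi> t. F \<phi> t = h (\<lambda>i. if i < k then \<phi> (c i) else t)"
    and Pz: "\<Psi> (Suc k) h (c(k := b)) = czero \<Psi>"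
    using ev unfolding cp_eval_is_def by blast
  obtain F' where F'a: "cp_adm B (\<lambda>t. t \<noteq> 0) F'"
    and eq: "cp_eq B \<Psi> (\<lambda>t. t \<noteq> 0) (\<lambda>\<phi> t. F \<phi> t * F' \<phi> t) (\<lambda>\<phi> t. 1)"
    using inv unfolding cp_invertible_def by blast
  obtain N :: nat and q G where qG: "\<forall>l<N. cp_adm B (\<lambda>t. t \<noteq> 0) (q l) \<and> cp_ker B \<Psi> (G l)"
    and idq: "\<forall>\<phi> t. t \<noteq> 0 \<longrightarrow> F \<phi> t * F' \<phi> t - 1 = (\<Sum>l<N. q l \<phi> t * G l \<phi>)"
    using eq unfolding cp_eq_def by (elim exE conjE) blast
  define G0 where "G0 = (\<lambda>\<phi>. h (\<lambda>i. if i < k then \<phi> (c i) else \<phi> b))"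
  have lh: "loc (Suc k) h" using hs unfolding smooth_def by (rule smooth_on_loc)
  have K0: "cp_ker B \<Psi> G0" unfolding cp_ker_def
  proof (rule exI[of _ "Suc k"], rule exI[of _ h], rule exI[of _ "c(k := b)"], intro conjI allI impI)
    fix i assume "i < Suc k" then show "(c(k := b)) i \<in> B" using cB b by simp
  next
    show "smooth (Suc k) h" by (rule hs)
  next
    fix \<phi> :: "'a \<Rightarrow> real"
    have "\<forall>i<Suc k. (\<lambda>i. if i < k then \<phi> (c i) else \<phi> b) i = (\<lambda>i. \<phi> ((c(k := b)) i)) i" by simp
    then show "G0 \<phi> = h (\<lambda>i. \<phi> ((c(k := b)) i))" unfolding G0_def by (rule locD[OF lh])
  next
    show "\<Psi> (Suc k) h (c(k := b)) = czero \<Psi>" by (rule Pz)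
  qed
  define qh where "qh = (\<lambda>l. if l = 0 then (\<lambda>\<phi> t. rho (t * \<phi> b) * F' \<phi> (\<phi> b))
                                else (\<lambda>\<phi> t. -1 * (rho (t * \<phi> b) * q (l - 1) \<phi> (\<phi> b))))"
  define Gh where "Gh = (\<lambda>l. if l = 0 then G0 else G (l - 1))"
  have adm_h: "\<forall>l<Suc N. cp_adm B (\<lambda>_. True) (qh l) \<and> cp_ker B \<Psi> (Gh l)"
  proof (intro allI impI conjI)
    fix l assume l: "l < Suc N"
    show "cp_adm B (\<lambda>_. True) (qh l)"
    proof (cases "l = 0")
      case True then show ?thesis unfolding qh_def using adm_rho[OF b F'a] by simp
    next
      case False
      then have "l - 1 < N" using l by simp
      then have "cp_adm B (\<lambda>t. t \<noteq> 0) (q (l - 1))" using qG by blast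
      then have "cp_adm B (\<lambda>_. True) (\<lambda>\<phi> t. -1 * (rho (t * \<phi> b) * q (l - 1) \<phi> (\<phi> b)))"
        by (intro adm_scale adm_rho[OF b]) simp_all
      then show ?thesis unfolding qh_def using False by simp
    qed
    show "cp_ker B \<Psi> (Gh l)"
    proof (cases "l = 0")
      case True then show ?thesis unfolding Gh_def using K0 by simp
    next
      case False
      then have "l - 1 < N" using l by simp
      then show ?thesis unfolding Gh_def using qG False by simp
    qed
  qed
  define H0 where "H0 = (\<lambda>\<phi> t. -1 * inverse (Dn (t * \<phi> b)))"
  have H0a: "cp_adm B (\<lambda>_. True) H0" unfolding H0_def by (rule adm_scale[OF _ adm_invDn[OF b]]) simp
  have key: "1 - H0 \<phi> t * (t * \<phi> b - 1) = (\<Sum>l<Suc N. qh l \<phi> t * Gh l \<phi>)" for \<phi> t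
  proof -
    define u where "u = t * \<phi> b"
    have L: "1 - H0 \<phi> t * (t * \<phi> b - 1) = rho u"
      unfolding H0_def u_def[symmetric] using rho_id[of u] by (simp add: algebra_simps)
    have "(\<Sum>l<Suc N. qh l \<phi> t * Gh l \<phi>) = qh 0 \<phi> t * Gh 0 \<phi> + (\<Sum>l<N. qh (Suc l) \<phi> t * Gh (Suc l) \<phi>)"
      by (rule sum.lessThan_Suc_shift)
    also have "\<dots> = rho u * (F' \<phi> (\<phi> b) * G0 \<phi> - (\<Sum>l<N. q l \<phi> (\<phi> b) * G l \<phi>))"
      unfolding qh_def Gh_def u_def by (simp add: algebra_simps sum_distrib_left sum_negf)
    also have "\<dots> = rho u"
    proof (cases "\<phi> b = 0")
      case True then show ?thesis unfolding u_def by (simp add: rho_small)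
    next
      case False
      have "G0 \<phi> = F \<phi> (\<phi> b)" unfolding G0_def using Fr by simp
      moreover have "F \<phi> (\<phi> b) * F' \<phi> (\<phi> b) - 1 = (\<Sum>l<N. q l \<phi> (\<phi> b) * G l \<phi>)" using idq False by blast
      ultimately show ?thesis by (simp add: algebra_simps)
    qed
    finally show ?thesis using L by simp
  qed
  show ?thesis unfolding loc_trivial_def
  proof (intro allI impI, elim conjE)
    fix F1 F2 assume a1: "cp_adm B (\<lambda>_. True) F1" and a2: "cp_adm B (\<lambda>_. True) F2"
    have d: "cp_adm B (\<lambda>_. True) (\<lambda>\<phi> t. F1 \<phi> t - F2 \<phi> t)" by (rule adm_diff[OF _ a1 a2]) simp
    have Ha: "cp_adm B (\<lambda>_. True) (\<lambda>\<phi> t. (F1 \<phi> t - F2 \<phi> t) * H0 \<phi> t)" by (rule adm_mult[OF _ d H0a]) simp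
    show "loc_eq B \<Psi> b F1 F2" unfolding loc_eq_def
    proof (rule exI[of _ "\<lambda>\<phi> t. (F1 \<phi> t - F2 \<phi> t) * H0 \<phi> t"], rule conjI[OF Ha])
      show "cp_eq B \<Psi> (\<lambda>_. True)
         (\<lambda>\<phi> t. F1 \<phi> t - (F1 \<phi> t - F2 \<phi> t) * H0 \<phi> t * (t * \<phi> b - 1)) F2"
        unfolding cp_eq_def
      proof (rule exI[of _ "Suc N"], rule exI[of _ "\<lambda>l \<phi> t. (F1 \<phi> t - F2 \<phi> t) * qh l \<phi> t"],
             rule exI[of _ Gh], intro conjI allI impI)
        fix l assume l: "l < Suc N"
        show "cp_adm B (\<lambda>_. True) (\<lambda>\<phi> t. (F1 \<phi> t - F2 \<phi> t) * qh l \<phi> t)"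
          by (rule adm_mult[OF _ d]) (use adm_h l in simp_all)
        show "cp_ker B \<Psi> (Gh l)" using adm_h l by blast
      next
        fix \<phi> t
        have "F1 \<phi> t - (F1 \<phi> t - F2 \<phi> t) * H0 \<phi> t * (t * \<phi> b - 1) - F2 \<phi> t
              = (F1 \<phi> t - F2 \<phi> t) * (1 - H0 \<phi> t * (t * \<phi> b - 1))" by (simp add: algebra_simps)
        also have "\<dots> = (\<Sum>l<Suc N. (F1 \<phi> t - F2 \<phi> t) * qh l \<phi> t * Gh l \<phi>)"
          unfolding key sum_distrib_left by (rule sum.cong) (simp_all add: mult.assoc)
        finally show "F1 \<phi> t - (F1 \<phi> t - F2 \<phi> t) * H0 \<phi> t * (t * \<phi> b - 1) - F2 \<phi> t
              = (\<Sum>l<Suc N. (F1 \<phi> t - F2 \<phi> t) * qh l \<phi> t * Gh l \<phi>)" .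
      qed
    qed
  qed
qed

lemma triv_imp_nil:
  assumes b: "b \<in> B" and tr: "loc_trivial B \<Psi> b"
    and Z: "\<Psi> (Suc 1) (\<lambda>x. x 1 - x 0) ((\<lambda>_. b)(1 := b)) = czero \<Psi>"
  shows "inf_nilpotent B \<Psi> b"
proof -
  have c1: "cp_adm B (\<lambda>_. True) (\<lambda>\<phi> t. 1)" by (rule adm_const) simp
  have c0: "cp_adm B (\<lambda>_. True) (\<lambda>\<phi> t. 0)" by (rule adm_const) simp
  have "loc_eq B \<Psi> b (\<lambda>\<phi> t. 1) (\<lambda>\<phi> t. 0)"
    using tr c1 c0 unfolding loc_trivial_def by blast
  then obtain H where Ha: "cp_adm B (\<lambda>_. True) H"
    and e: "cp_eq B \<Psi> (\<lambda>_. True) (\<lambda>\<phi> t. 1 - H \<phi> t * (t * \<phi> b - 1)) (\<lambda>\<phi> t. 0)"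
    unfolding loc_eq_def by blast
  obtain N :: nat and q G where qG: "\<forall>l<N. cp_adm B (\<lambda>_. True) (q l) \<and> cp_ker B \<Psi> (G l)"
    and idq: "\<forall>\<phi> t. True \<longrightarrow> 1 - H \<phi> t * (t * \<phi> b - 1) - 0 = (\<Sum>l<N. q l \<phi> t * G l \<phi>)"
    using e unfolding cp_eq_def by (elim exE conjE) blast
  define F where "F = (\<lambda>(\<phi>::'a \<Rightarrow> real) (s::real). s - \<phi> b)"
  have Fa: "cp_adm B (\<lambda>_. True) F" unfolding F_def by (rule adm_lin[OF b])
  have ev: "cp_eval_is B \<Psi> F b (czero \<Psi>)" unfolding cp_eval_is_def
    by (rule exI[of _ 1], rule exI[of _ "\<lambda>x. x 1 - x 0"], rule exI[of _ "\<lambda>_. b"])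
       (use b smooth_lin Z in \<open>simp add: F_def smooth_def\<close>)
  define F' where "F' = (\<lambda>\<phi> s. -1 * (H \<phi> (inverse s) * inverse s))"
  have F'a: "cp_adm B (\<lambda>s. s \<noteq> 0) F'" unfolding F'_def
    by (rule adm_scale[OF open_nz adm_mult[OF open_nz adm_invsub[OF Ha] adm_inv]])
  have inv: "cp_invertible B \<Psi> (\<lambda>t. t \<noteq> 0) F" unfolding cp_invertible_def
  proof (rule exI[of _ F'], rule conjI[OF F'a])
    show "cp_eq B \<Psi> (\<lambda>t. t \<noteq> 0) (\<lambda>\<phi> t. F \<phi> t * F' \<phi> t) (\<lambda>\<phi> t. 1)" unfolding cp_eq_def
    proof (rule exI[of _ N], rule exI[of _ "\<lambda>l \<phi> s. -1 * q l \<phi> (inverse s)"], rule exI[of _ G],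
           intro conjI allI impI)
      fix l assume l: "l < N"
      show "cp_adm B (\<lambda>t. t \<noteq> 0) (\<lambda>\<phi> s. -1 * q l \<phi> (inverse s))"
        by (rule adm_scale[OF open_nz adm_invsub]) (use qG l in blast)
      show "cp_ker B \<Psi> (G l)" using qG l by blast
    next
      fix \<phi> and s :: real assume s: "s \<noteq> 0"
      have "F \<phi> s * F' \<phi> s - 1 = - (1 - H \<phi> (inverse s) * (inverse s * \<phi> b - 1) - 0)"
        unfolding F_def F'_def using s by (simp add: field_simps)
      also have "\<dots> = - (\<Sum>l<N. q l \<phi> (inverse s) * G l \<phi>)" using idq by simp
      also have "\<dots> = (\<Sum>l<N. -1 * q l \<phi> (inverse s) * G l \<phi>)" by (simp add: sum_negf)
      finally show "F \<phi> s * F' \<phi> s - 1 = (\<Sum>l<N. -1 * q l \<phi> (inverse s) * G l \<phi>)" .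
    qed
  qed
  show ?thesis unfolding inf_nilpotent_def using Fa ev inv by blast
qed


lemma Phi_diag_zero:
  assumes R: "cinf_ring A \<Phi>" and a: "a \<in> A" and sf: "smooth (Suc 1) f" and fz: "\<And>x::nat\<Rightarrow>real. f (\<lambda>j. x 0) = 0"
  shows "\<Phi> (Suc 1) f (\<lambda>_. a) = czero \<Phi>"
proof -
  have Lc: "\<forall>n f a b. (\<forall>i<n. a i = b i) \<longrightarrow> \<Phi> n f a = \<Phi> n f b"
    using R[unfolded cinf_ring_def, THEN conjunct2, THEN conjunct1] .
  have Pr: "\<forall>n i a. i < n \<and> (\<forall>j<n. a j \<in> A) \<longrightarrow> \<Phi> n (\<lambda>x. x i) a = a i"
    using R[unfolded cinf_ring_def, THEN conjunct2, THEN conjunct2, THEN conjunct2, THEN conjunct1] .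
  have Co: "\<forall>m n f g a. smooth m f \<and> (\<forall>j<m. smooth n (g j)) \<and> (\<forall>i<n. a i \<in> A) \<longrightarrow>
        \<Phi> n (\<lambda>x. f (\<lambda>j. g j x)) a = \<Phi> m f (\<lambda>j. \<Phi> n (g j) a)"
    using R[unfolded cinf_ring_def, THEN conjunct2, THEN conjunct2, THEN conjunct2, THEN conjunct2] .
  have s1: "smooth 1 (\<lambda>x. x 0)" unfolding smooth_def by (rule smooth_proj[OF open_True]) simp
  have s0: "smooth 0 (\<lambda>_. 0)" unfolding smooth_def by (rule smooth_const[OF open_True])
  have aA: "\<forall>i<1. (\<lambda>_::nat. a) i \<in> A" using a by simp
  have c1: "smooth (Suc 1) f \<and> (\<forall>j<Suc 1. smooth 1 ((\<lambda>j (x::nat\<Rightarrow>real). x 0) j)) \<and> (\<forall>i<1. (\<lambda>_::nat. a) i \<in> A)"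
    using sf s1 aA by simp
  have "\<Phi> 1 (\<lambda>x. f (\<lambda>j. (\<lambda>j x. x 0) j x)) (\<lambda>_. a) = \<Phi> (Suc 1) f (\<lambda>j. \<Phi> 1 ((\<lambda>j x. x 0) j) (\<lambda>_. a))"
    by (rule Co[THEN spec[of _ "Suc 1"], THEN spec[of _ 1], THEN spec[of _ f], THEN spec[of _ "\<lambda>j x. x 0"],
        THEN spec[of _ "\<lambda>_. a"], THEN mp, OF c1])
  moreover have "\<Phi> 1 (\<lambda>x. x 0) (\<lambda>_. a) = a" using Pr aA by simp
  moreover have "(\<lambda>x. f (\<lambda>j. (\<lambda>j x. x 0) j x)) = (\<lambda>x::nat\<Rightarrow>real. 0)" by (rule ext) (simp add: fz)
  ultimately have st1: "\<Phi> (Suc 1) f (\<lambda>_. a) = \<Phi> 1 (\<lambda>x. 0) (\<lambda>_. a)" by simp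
  have c2: "smooth 0 (\<lambda>_::nat\<Rightarrow>real. 0::real) \<and> (\<forall>j::nat<0. smooth 1 ((\<lambda>j (x::nat\<Rightarrow>real). 0::real) j)) \<and> (\<forall>i<1. (\<lambda>_::nat. a) i \<in> A)"
    using s0 aA by auto
  have "\<Phi> 1 (\<lambda>x. (\<lambda>_. 0) (\<lambda>j. (\<lambda>j x. 0) j x)) (\<lambda>_. a) = \<Phi> 0 (\<lambda>_. 0) (\<lambda>j. \<Phi> 1 ((\<lambda>j x. 0) j) (\<lambda>_. a))"
    by (rule Co[THEN spec[of _ 0], THEN spec[of _ 1], THEN spec[of _ "\<lambda>_. 0"], THEN spec[of _ "\<lambda>j x. 0"],
        THEN spec[of _ "\<lambda>_. a"], THEN mp, OF c2])
  then have st2: "\<Phi> 1 (\<lambda>x. 0) (\<lambda>_. a) = \<Phi> 0 (\<lambda>_. 0) (\<lambda>j. \<Phi> 1 (\<lambda>x. 0) (\<lambda>_. a))" by simp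
  have st3: "\<Phi> 0 (\<lambda>_. 0) (\<lambda>j. \<Phi> 1 (\<lambda>x. 0) (\<lambda>_. a)) = czero \<Phi>"
    unfolding czero_def
    by (rule mp[OF Lc[THEN spec[of _ 0], THEN spec[of _ "\<lambda>_. 0"], THEN spec[of _ "\<lambda>j. \<Phi> 1 (\<lambda>x. 0) (\<lambda>_. a)"],
        THEN spec[of _ "\<lambda>_. undefined"]]]) simp
  show ?thesis using st1 st2 st3 by simp
qed

lemma quot_Z:
  assumes R: "cinf_ring A \<Phi>" and Id: "cinf_ideal A \<Phi> I" and g: "g \<in> A"
  shows "qops A \<Phi> I (Suc 1) (\<lambda>x. x 1 - x 0) ((\<lambda>_. qcls A \<Phi> I g)(1 := qcls A \<Phi> I g)) = czero (qops A \<Phi> I)"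
proof -
  define b where "b = qcls A \<Phi> I g"
  have Lc: "\<forall>n f a b. (\<forall>i<n. a i = b i) \<longrightarrow> \<Phi> n f a = \<Phi> n f b"
    using R[unfolded cinf_ring_def, THEN conjunct2, THEN conjunct1] .
  have sl: "smooth (Suc 1) (\<lambda>x. x 1 - x 0)" unfolding smooth_def by (rule smooth_lin)
  have sl': "smooth (Suc 1) (\<lambda>x. x 0 - x 1)" unfolding smooth_def by (rule smooth_lin')
  have p: "pair2 g g = (\<lambda>_. g)" unfolding pair2_def by simp
  have "csub \<Phi> g g = \<Phi> (Suc 1) (\<lambda>x. x 0 - x 1) (\<lambda>_. g)" unfolding csub_def p by (simp add: numeral_2_eq_2)
  also have "\<dots> = czero \<Phi>" by (rule Phi_diag_zero[OF R g sl']) simp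
  finally have "csub \<Phi> g g \<in> I" using Id unfolding cinf_ideal_def by simp
  then have gb: "g \<in> b" unfolding b_def qcls_def using g by simp
  define a0 where "a0 = (SOME a. a \<in> b)"
  have a0b: "a0 \<in> b" unfolding a0_def using gb by (rule someI)
  then have a0A: "a0 \<in> A" unfolding b_def qcls_def by simp
  have X: "(\<lambda>i. SOME a. a \<in> ((\<lambda>_. b)(1 := b)) i) = (\<lambda>_. a0)" unfolding a0_def by (rule ext) simp
  have "qops A \<Phi> I (Suc 1) (\<lambda>x. x 1 - x 0) ((\<lambda>_. b)(1 := b)) = qcls A \<Phi> I (\<Phi> (Suc 1) (\<lambda>x. x 1 - x 0) (\<lambda>_. a0))"
    unfolding qops_def X ..
  also have "\<dots> = qcls A \<Phi> I (czero \<Phi>)" by (subst Phi_diag_zero[OF R a0A sl]) simp_all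
  also have "\<dots> = czero (qops A \<Phi> I)"
  proof -
    have "\<Phi> 0 (\<lambda>_. 0) (\<lambda>_. undefined) = \<Phi> 0 (\<lambda>_. 0) (\<lambda>i. SOME a. a \<in> (undefined :: 'a set))"
      by (rule mp[OF Lc[THEN spec[of _ 0], THEN spec[of _ "\<lambda>_. 0"], THEN spec[of _ "\<lambda>_. undefined"],
        THEN spec[of _ "\<lambda>i. SOME a. a \<in> (undefined :: 'a set)"]]]) simp
    then show ?thesis unfolding czero_def qops_def by simp
  qed
  finally show ?thesis unfolding b_def .
qed

theorem proposition2p5:
  fixes A :: "'a set" and \<Phi> :: "'a cops" and I :: "'a set" and g :: 'a
  assumes "cinf_ring A \<Phi>" and "cinf_ideal A \<Phi> I" and "g \<in> A"
  shows "g \<in> inf_radical A \<Phi> I \<longleftrightarrow>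
         inf_nilpotent (qcarrier A \<Phi> I) (qops A \<Phi> I) (qcls A \<Phi> I g)"
proof -
  have b: "qcls A \<Phi> I g \<in> qcarrier A \<Phi> I" unfolding qcarrier_def using assms(3) by simp
  have "g \<in> inf_radical A \<Phi> I \<longleftrightarrow> loc_trivial (qcarrier A \<Phi> I) (qops A \<Phi> I) (qcls A \<Phi> I g)"
    unfolding inf_radical_def using assms(3) by simp
  also have "\<dots> \<longleftrightarrow> inf_nilpotent (qcarrier A \<Phi> I) (qops A \<Phi> I) (qcls A \<Phi> I g)"
  proof
    assume "loc_trivial (qcarrier A \<Phi> I) (qops A \<Phi> I) (qcls A \<Phi> I g)"
    then show "inf_nilpotent (qcarrier A \<Phi> I) (qops A \<Phi> I) (qcls A \<Phi> I g)"
      by (rule triv_imp_nil[OF b _ quot_Z[OF assms]])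
  next
    assume "inf_nilpotent (qcarrier A \<Phi> I) (qops A \<Phi> I) (qcls A \<Phi> I g)"
    then show "loc_trivial (qcarrier A \<Phi> I) (qops A \<Phi> I) (qcls A \<Phi> I g)"
      by (rule nil_imp_triv[OF b])
  qed
  finally show ?thesis .
qed

end
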